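(* Let $\Xi\to C$ be a sequent without stoups (regarded, in the context of $\mathcal{M}'_{2015}$, as a sequent all of whose stoups are empty). Then the following are equivalent: (1) $\Xi\to C$ is derivable in $\mathcal{F}_{2015}$ without cut; (2) $\Xi\to C$ is derivable in $\mathcal{F}_{2015}$, possibly using cut; (3) $\Xi\to C$ is derivable in $\mathcal{M}'_{2015}$ extended with the stoup cut rule; (4) $\Xi\to C$ is derivable in $\mathcal{M}'_{2015}$ (without cut).
   Context: Formulae are built from a countable set of variables and $\mathbf1$ by $\backslash,/,\cdot,\wedge,\vee$ and the unary $\langle\rangle$, $[]^{-1}$, $!$. Calculi with stoups: a stoup is a finite multiset of formulae ($\varnothing$ empty); a tree term is a formula or $[\Xi]$; a meta-formula is $\zeta;\Gamma$ ($\zeta$ a stoup, $\Gamma$ a finite sequence of tree terms, empty $\Lambda$), $\varnothing;\Gamma$ written $\Gamma$; comma is concatenation / multiset union; sequents $\Xi\to C$; $\Xi(\Theta)$ designates an occurrence of a meta-formula $\Theta$ which is $\Xi$ itself or the content of a bracket $[\Theta]$ at any depth. Rules of $\mathcal{M}'_{2015}$: axioms $A\to A$, $\Lambda\to\mathbf1$; ($/L$) from $\zeta_1;\Gamma\to B$ and $\Xi(\zeta_2;\Delta_1,C,\Delta_2)\to D$ infer $\Xi(\zeta_1,\zeta_2;\Delta_1,C/B,\Gamma,\Delta_2)\to D$; ($/R$) from $\zeta;\Gamma,B\to C$ infer $\zeta;\Gamma\to C/B$; ($\backslash L$) from $\zeta_1;\Gamma\to A$ and $\Xi(\zeta_2;\Delta_1,C,\Delta_2)\to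 D$ infer $\Xi(\zeta_1,\zeta_2;\Delta_1,\Gamma,A\backslash C,\Delta_2)\to D$; ($\backslash R$) from $\zeta;A,\Gamma\to C$ infer $\zeta;\Gamma\to A\backslash C$; ($\cdot L$) from $\Xi(\zeta;\Delta_1,A,B,\Delta_2)\to D$ infer $\Xi(\zeta;\Delta_1,A\cdot B,\Delta_2)\to D$; ($\cdot R$) from $\zeta_1;\Delta\to A$, $\zeta_2;\Gamma\to B$ infer $\zeta_1,\zeta_2;\Delta,\Gamma\to A\cdot B$; ($\mathbf1L$) from $\Xi(\zeta;\Delta_1,\Delta_2)\to A$ infer $\Xi(\zeta;\Delta_1,\mathbf1,\Delta_2)\to A$; ($\vee L$) from $\Xi(\zeta;\Delta_1,A_1,\Delta_2)\to C$ and $\Xi(\zeta;\Delta_1,A_2,\Delta_2)\to C$ infer $\Xi(\zeta;\Delta_1,A_1\vee A_2,\Delta_2)\to C$; ($\vee R_i$) from $\Xi\to A_i$ infer $\Xi\to A_1\vee A_2$; ($\wedge L_i$) from $\Xi(\zeta;\Delta_1,A_i,\Delta_2)\to C$ infer $\Xi(\zeta;\Delta_1,A_1\wedge A_2,\Delta_2)\to C$; ($\wedge R$) from $\Xi\to A_1$ and $\Xi\to A_2$ infer $\Xi\to A_1\wedge A_2$; ($[]^{-1}L$) from $\Xi(\zeta;\Delta_1,A,\Delta_2)\to B$ infer $\Xi(\zeta;\Delta_1,[[]^{-1}A],\Delta_2)\to B$; ($[]^{-1}R$) from $[\Xi]\to A$ infer $\Xi\to[]^{-1}A$; ($\langle\rangle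 L$) from $\Xi(\zeta;\Delta_1,[A],\Delta_2)\to B$ infer $\Xi(\zeta;\Delta_1,\langle\rangle A,\Delta_2)\to B$; ($\langle\rangle R$) from $\Xi\to A$ infer $[\Xi]\to\langle\rangle A$; ($!L$) from $\Xi(\zeta,A;\Gamma_1,\Gamma_2)\to B$ infer $\Xi(\zeta;\Gamma_1,!A,\Gamma_2)\to B$; ($!P$) from $\Xi(\zeta;\Gamma_1,A,\Gamma_2)\to B$ infer $\Xi(\zeta,A;\Gamma_1,\Gamma_2)\to B$; ($!R'$) from $\zeta;\Lambda\to B$ infer $\zeta;\Lambda\to!B$, if $\zeta\ne\varnothing$; ($!C'$) from $\Xi(\zeta_1,\zeta_2;\Gamma_1,[\zeta',\zeta_2;\Gamma_2],\Gamma_3)\to C$ infer $\Xi(\zeta_1,\zeta_2,\zeta';\Gamma_1,\Gamma_2,\Gamma_3)\to C$, if $\zeta_2\ne\varnothing$. The stoup cut rule is: from $\xi;\Pi\to A$ and $\Xi(\zeta;\Gamma_1,A,\Gamma_2)\to C$ infer $\Xi(\xi,\zeta;\Gamma_1,\Pi,\Gamma_2)\to C$. Stoup-free calculus $\mathcal{F}_{2015}$: meta-formulae are finite sequences of tree terms; rules are the stoup-free versions of the rules above other than $!L,!P,!R',!C'$ (drop all stoups), together with ($!L$) from $\Xi(\Delta_1,A,\Delta_2)\to C$ infer $\Xi(\Delta_1,!A,\Delta_2)\to C$; ($!P_1$) from $\Xi(\Delta_1,!A,\Phi,\Delta_2)\to C$ infer $\Xi(\Delta_1,\Phi,!A,\Delta_2)\to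 C$; ($!P_2$) the converse; ($!R$) from $!A_1,\dots,!A_n\to B$ infer $!A_1,\dots,!A_n\to!B$ ($n\ge1$); ($!C$) from $\Xi(!A_1,\dots,!A_n,\Gamma_1,[!A_1,\dots,!A_n,\Gamma_2],\Gamma_3)\to C$ infer $\Xi(!A_1,\dots,!A_n,\Gamma_1,\Gamma_2,\Gamma_3)\to C$ ($n\geq1$); and the cut rule: from $\Pi\to A$ and $\Xi(\Gamma_1,A,\Gamma_2)\to C$ infer $\Xi(\Gamma_1,\Pi,\Gamma_2)\to C$. *)

theory Defs
  imports Main "HOL-Library.Multiset"
begin

text \<open>Under A C is A\C, Over C B is C/B, Box A is []^{-1}A, Diam A is the diamond, Bang A is !A.\<close>
datatype fm = Var nat | One | Under fm fm | Over fm fm | Prod fm fm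
  | Meet fm fm | Join fm fm | Diam fm | Box fm | Bang fm

datatype tt = F fm | Br "tt list"

text \<open>Contexts: Xi(Theta) designates Theta as Xi itself or the full content of a bracket at any depth.\<close>
datatype ctx = Hole | In "tt list" ctx "tt list"

primrec plug :: "ctx \<Rightarrow> tt list \<Rightarrow> tt list" where
  "plug Hole T = T"
| "plug (In G1 c G2) T = G1 @ [Br (plug c T)] @ G2"

definition bangs :: "fm list \<Rightarrow> tt list" where
  "bangs As = map (\<lambda>A. F (Bang A)) As"

inductive Fd :: "bool \<Rightarrow> tt list \<Rightarrow> fm \<Rightarrow> bool" for cut :: bool where
  ax: "Fd cut [F A] A"
| oneR: "Fd cut [] One"
| overL: "Fd cut G B \<Longrightarrow> Fd cut (plug c (D1 @ [F C] @ D2)) D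
          \<Longrightarrow> Fd cut (plug c (D1 @ [F (Over C B)] @ G @ D2)) D"
| overR: "Fd cut (G @ [F B]) C \<Longrightarrow> Fd cut G (Over C B)"
| underL: "Fd cut G A \<Longrightarrow> Fd cut (plug c (D1 @ [F C] @ D2)) D
          \<Longrightarrow> Fd cut (plug c (D1 @ G @ [F (Under A C)] @ D2)) D"
| underR: "Fd cut (F A # G) C \<Longrightarrow> Fd cut G (Under A C)"
| prodL: "Fd cut (plug c (D1 @ [F A, F B] @ D2)) D \<Longrightarrow> Fd cut (plug c (D1 @ [F (Prod A B)] @ D2)) D"
| prodR: "Fd cut D A \<Longrightarrow> Fd cut G B \<Longrightarrow> Fd cut (D @ G) (Prod A B)"
| oneL: "Fd cut (plug c (D1 @ D2)) A \<Longrightarrow> Fd cut (plug c (D1 @ [F One] @ D2)) A"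
| joinL: "Fd cut (plug c (D1 @ [F A1] @ D2)) C \<Longrightarrow> Fd cut (plug c (D1 @ [F A2] @ D2)) C
          \<Longrightarrow> Fd cut (plug c (D1 @ [F (Join A1 A2)] @ D2)) C"
| joinR1: "Fd cut X A1 \<Longrightarrow> Fd cut X (Join A1 A2)"
| joinR2: "Fd cut X A2 \<Longrightarrow> Fd cut X (Join A1 A2)"
| meetL1: "Fd cut (plug c (D1 @ [F A1] @ D2)) C \<Longrightarrow> Fd cut (plug c (D1 @ [F (Meet A1 A2)] @ D2)) C"
| meetL2: "Fd cut (plug c (D1 @ [F A2] @ D2)) C \<Longrightarrow> Fd cut (plug c (D1 @ [F (Meet A1 A2)] @ D2)) C"
| meetR: "Fd cut X A1 \<Longrightarrow> Fd cut X A2 \<Longrightarrow> Fd cut X (Meet A1 A2)"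
| boxL: "Fd cut (plug c (D1 @ [F A] @ D2)) B \<Longrightarrow> Fd cut (plug c (D1 @ [Br [F (Box A)]] @ D2)) B"
| boxR: "Fd cut [Br X] A \<Longrightarrow> Fd cut X (Box A)"
| diamL: "Fd cut (plug c (D1 @ [Br [F A]] @ D2)) B \<Longrightarrow> Fd cut (plug c (D1 @ [F (Diam A)] @ D2)) B"
| diamR: "Fd cut X A \<Longrightarrow> Fd cut [Br X] (Diam A)"
| bangL: "Fd cut (plug c (D1 @ [F A] @ D2)) C \<Longrightarrow> Fd cut (plug c (D1 @ [F (Bang A)] @ D2)) C"
| bangP1: "Fd cut (plug c (D1 @ [F (Bang A)] @ P @ D2)) C \<Longrightarrow> Fd cut (plug c (D1 @ P @ [F (Bang A)] @ D2)) C"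
| bangP2: "Fd cut (plug c (D1 @ P @ [F (Bang A)] @ D2)) C \<Longrightarrow> Fd cut (plug c (D1 @ [F (Bang A)] @ P @ D2)) C"
| bangR: "As \<noteq> [] \<Longrightarrow> Fd cut (bangs As) B \<Longrightarrow> Fd cut (bangs As) (Bang B)"
| bangC: "As \<noteq> [] \<Longrightarrow> Fd cut (plug c (bangs As @ G1 @ [Br (bangs As @ G2)] @ G3)) C
          \<Longrightarrow> Fd cut (plug c (bangs As @ G1 @ G2 @ G3)) C"
| cutR: "cut \<Longrightarrow> Fd cut P A \<Longrightarrow> Fd cut (plug c (G1 @ [F A] @ G2)) C
          \<Longrightarrow> Fd cut (plug c (G1 @ P @ G2)) C"

text \<open>Tree terms with stoups: a formula, or a bracket [zeta; Gamma] around a meta-formula.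
  A meta-formula is a pair (stoup, sequence of tree terms).\<close>
datatype stt = SF fm | SBr "fm multiset" "stt list"

type_synonym mf = "fm multiset \<times> stt list"

datatype sctx = SHole | SIn "fm multiset" "stt list" sctx "stt list"

text \<open>splug c z G is Xi(z; G) where (z; G) is Xi itself or the full content of a bracket.\<close>
primrec splug :: "sctx \<Rightarrow> fm multiset \<Rightarrow> stt list \<Rightarrow> mf" where
  "splug SHole z G = (z, G)"
| "splug (SIn z' G1 c G2) z G = (z', G1 @ [case_prod SBr (splug c z G)] @ G2)"

inductive Md :: "bool \<Rightarrow> mf \<Rightarrow> fm \<Rightarrow> bool" for cut :: bool where
  ax: "Md cut ({#}, [SF A]) A"
| oneR: "Md cut ({#}, []) One"
| overL: "Md cut (z1, G) B \<Longrightarrow> Md cut (splug c z2 (D1 @ [SF C] @ D2)) D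
          \<Longrightarrow> Md cut (splug c (z1 + z2) (D1 @ [SF (Over C B)] @ G @ D2)) D"
| overR: "Md cut (z, G @ [SF B]) C \<Longrightarrow> Md cut (z, G) (Over C B)"
| underL: "Md cut (z1, G) A \<Longrightarrow> Md cut (splug c z2 (D1 @ [SF C] @ D2)) D
          \<Longrightarrow> Md cut (splug c (z1 + z2) (D1 @ G @ [SF (Under A C)] @ D2)) D"
| underR: "Md cut (z, SF A # G) C \<Longrightarrow> Md cut (z, G) (Under A C)"
| prodL: "Md cut (splug c z (D1 @ [SF A, SF B] @ D2)) D \<Longrightarrow> Md cut (splug c z (D1 @ [SF (Prod A B)] @ D2)) D"
| prodR: "Md cut (z1, D) A \<Longrightarrow> Md cut (z2, G) B \<Longrightarrow> Md cut (z1 + z2, D @ G) (Prod A B)"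
| oneL: "Md cut (splug c z (D1 @ D2)) A \<Longrightarrow> Md cut (splug c z (D1 @ [SF One] @ D2)) A"
| joinL: "Md cut (splug c z (D1 @ [SF A1] @ D2)) C \<Longrightarrow> Md cut (splug c z (D1 @ [SF A2] @ D2)) C
          \<Longrightarrow> Md cut (splug c z (D1 @ [SF (Join A1 A2)] @ D2)) C"
| joinR1: "Md cut X A1 \<Longrightarrow> Md cut X (Join A1 A2)"
| joinR2: "Md cut X A2 \<Longrightarrow> Md cut X (Join A1 A2)"
| meetL1: "Md cut (splug c z (D1 @ [SF A1] @ D2)) C \<Longrightarrow> Md cut (splug c z (D1 @ [SF (Meet A1 A2)] @ D2)) C"
| meetL2: "Md cut (splug c z (D1 @ [SF A2] @ D2)) C \<Longrightarrow> Md cut (splug c z (D1 @ [SF (Meet A1 A2)] @ D2)) C"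
| meetR: "Md cut X A1 \<Longrightarrow> Md cut X A2 \<Longrightarrow> Md cut X (Meet A1 A2)"
| boxL: "Md cut (splug c z (D1 @ [SF A] @ D2)) B
          \<Longrightarrow> Md cut (splug c z (D1 @ [SBr {#} [SF (Box A)]] @ D2)) B"
| boxR: "Md cut ({#}, [case_prod SBr X]) A \<Longrightarrow> Md cut X (Box A)"
| diamL: "Md cut (splug c z (D1 @ [SBr {#} [SF A]] @ D2)) B \<Longrightarrow> Md cut (splug c z (D1 @ [SF (Diam A)] @ D2)) B"
| diamR: "Md cut X A \<Longrightarrow> Md cut ({#}, [case_prod SBr X]) (Diam A)"
| bangL: "Md cut (splug c (z + {#A#}) (G1 @ G2)) B \<Longrightarrow> Md cut (splug c z (G1 @ [SF (Bang A)] @ G2)) B"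
| bangP: "Md cut (splug c z (G1 @ [SF A] @ G2)) B \<Longrightarrow> Md cut (splug c (z + {#A#}) (G1 @ G2)) B"
| bangR': "z \<noteq> {#} \<Longrightarrow> Md cut (z, []) B \<Longrightarrow> Md cut (z, []) (Bang B)"
| bangC': "z2 \<noteq> {#} \<Longrightarrow> Md cut (splug c (z1 + z2) (G1 @ [SBr (z' + z2) G2] @ G3)) C
          \<Longrightarrow> Md cut (splug c (z1 + z2 + z') (G1 @ G2 @ G3)) C"
| cutR: "cut \<Longrightarrow> Md cut (x, P) A \<Longrightarrow> Md cut (splug c z (G1 @ [SF A] @ G2)) C
          \<Longrightarrow> Md cut (splug c (x + z) (G1 @ P @ G2)) C"

primrec emb :: "tt \<Rightarrow> stt" where
  "emb (F A) = SF A"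
| "emb (Br G) = SBr {#} (map emb G)"

end

theory Submission
  imports Defs
begin


lemma Fd_mono: "Fd False X C \<Longrightarrow> Fd b X C"
  by (induction rule: Fd.induct) (blast intro: Fd.intros)+

lemma Md_mono: "Md False X C \<Longrightarrow> Md b X C"
  by (induction rule: Md.induct) (blast intro: Md.intros)+

primrec cc :: "ctx \<Rightarrow> ctx \<Rightarrow> ctx" where
  "cc Hole d = d"
| "cc (In G1 c G2) d = In G1 (cc c d) G2"

lemma plug_cc: "plug (cc c d) Y = plug c (plug d Y)"
  by (induction c) auto

lemma ctx_comb: "\<exists>c' L R. \<forall>Y. plug c (G1 @ plug c2 (D1 @ Y @ D2) @ G2) = plug c' (L @ Y @ R)"
proof (cases c2)
  case Hole
  then show ?thesis by (rule_tac x=c in exI, rule_tac x="G1@D1" in exI, rule_tac x="D2@G2" in exI) simp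
next
  case (In H1 c3 H2)
  show ?thesis
    apply (rule_tac x="cc c (In (G1@H1) c3 (H2@G2))" in exI, rule_tac x="D1" in exI, rule_tac x="D2" in exI)
    using In by (simp add: plug_cc)
qed

lemma plug_Br: "plug c (D1 @ [Br Y] @ D2) = plug (cc c (In D1 Hole D2)) Y"
  by (simp add: plug_cc)

lemma bangs_append[simp]: "bangs (xs @ ys) = bangs xs @ bangs ys"
  by (simp add: bangs_def)
lemma bangs_Cons[simp]: "bangs (x # ys) = F (Bang x) # bangs ys"
  by (simp add: bangs_def)
lemma bangs_Nil[simp]: "bangs [] = []"
  by (simp add: bangs_def)

lemma bangs_move1: "Fd b (plug c (D1 @ bangs As @ P @ D2)) C \<Longrightarrow> Fd b (plug c (D1 @ P @ bangs As @ D2)) C"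
proof (induction As arbitrary: D1 D2)
  case Nil then show ?case by simp
next
  case (Cons A As)
  from Cons.prems have "Fd b (plug c ((D1 @ [F (Bang A)]) @ bangs As @ P @ D2)) C" by simp
  from Cons.IH[OF this] have "Fd b (plug c (D1 @ [F (Bang A)] @ P @ (bangs As @ D2))) C" by simp
  from Fd.bangP1[OF this] show ?case by simp
qed

lemma bangs_move2: "Fd b (plug c (D1 @ P @ bangs As @ D2)) C \<Longrightarrow> Fd b (plug c (D1 @ bangs As @ P @ D2)) C"
proof (induction As arbitrary: D1 D2)
  case Nil then show ?case by simp
next
  case (Cons A As)
  from Cons.prems have "Fd b (plug c (D1 @ P @ [F (Bang A)] @ (bangs As @ D2))) C" by simp
  from Fd.bangP2[OF this] have "Fd b (plug c ((D1 @ [F (Bang A)]) @ P @ bangs As @ D2)) C" by simp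
  from Cons.IH[OF this] show ?case by simp
qed

lemma bangs_perm: "mset L = mset L' \<Longrightarrow> Fd b (plug c (D1 @ bangs L @ D2)) C \<Longrightarrow> Fd b (plug c (D1 @ bangs L' @ D2)) C"
proof (induction L arbitrary: L' D1 D2)
  case Nil then show ?case by simp
next
  case (Cons A L0)
  have "A \<in> set L'" using Cons.prems(1) by (metis list.set_intros(1) set_mset_mset)
  then obtain L1 L2 where L': "L' = L1 @ A # L2" by (metis split_list)
  have m: "mset L0 = mset (L1 @ L2)" using Cons.prems(1) L' by simp
  from Cons.prems(2) have "Fd b (plug c ((D1 @ [F (Bang A)]) @ bangs L0 @ D2)) C" by simp
  from Cons.IH[OF m this] have "Fd b (plug c (D1 @ bangs [A] @ bangs L1 @ (bangs L2 @ D2))) C" by simp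
  from bangs_move1[OF this] show ?case using L' by simp
qed



inductive rl :: "fm \<Rightarrow> tt list \<Rightarrow> tt list \<Rightarrow> tt list \<Rightarrow> bool" for A :: fm and P :: "tt list" where
  rl_nil: "rl A P [] []"
| rl_rep: "rl A P T T' \<Longrightarrow> rl A P (F A # T) (P @ T')"
| rl_F: "rl A P T T' \<Longrightarrow> rl A P (F B # T) (F B # T')"
| rl_Br: "rl A P X X' \<Longrightarrow> rl A P T T' \<Longrightarrow> rl A P (Br X # T) (Br X' # T')"

inductive rc :: "fm \<Rightarrow> tt list \<Rightarrow> ctx \<Rightarrow> ctx \<Rightarrow> bool" for A :: fm and P :: "tt list" where
  "rc A P Hole Hole"
| "rl A P G1 G1' \<Longrightarrow> rc A P c c' \<Longrightarrow> rl A P G2 G2' \<Longrightarrow> rc A P (In G1 c G2) (In G1' c' G2')"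

lemma rl_refl_aux: "rl A P T T \<Longrightarrow> rl A P (t # T) (t # T)"
proof (induction t arbitrary: T)
  case (F B) then show ?case by (rule rl_F)
next
  case (Br X)
  have "\<forall>Y. set Y \<subseteq> set X \<longrightarrow> rl A P Y Y"
  proof
    fix Y show "set Y \<subseteq> set X \<longrightarrow> rl A P Y Y"
      using Br.IH by (induction Y) (auto intro: rl_nil)
  qed
  then have "rl A P X X" by blast
  then show ?case using Br.prems by (rule rl_Br)
qed

lemma rl_refl: "rl A P X X"
  by (induction X) (auto intro: rl_nil rl_refl_aux)

lemma rl_Cons_inv: "rl A P (t # T) T' \<Longrightarrow>
   (t = F A \<and> (\<exists>T''. T' = P @ T'' \<and> rl A P T T'')) \<or>
   (\<exists>B T''. t = F B \<and> T' = F B # T'' \<and> rl A P T T'') \<or>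
   (\<exists>X X' T''. t = Br X \<and> T' = Br X' # T'' \<and> rl A P X X' \<and> rl A P T T'')"
  by (erule rl.cases) auto

lemma rl_append: "rl A P X X' \<Longrightarrow> rl A P Y Y' \<Longrightarrow> rl A P (X @ Y) (X' @ Y')"
  by (induction rule: rl.induct) (auto intro: rl.intros)

lemma rl_append_split: "rl A P (X @ Y) T' \<Longrightarrow> \<exists>X' Y'. T' = X' @ Y' \<and> rl A P X X' \<and> rl A P Y Y'"
proof (induction X arbitrary: T')
  case Nil then show ?case using rl_nil by fastforce
next
  case (Cons t X)
  from Cons.prems have "rl A P (t # (X @ Y)) T'" by simp
  from rl_Cons_inv[OF this] show ?case
  proof (elim disjE exE conjE)
    fix T'' assume "t = F A" "T' = P @ T''" "rl A P (X @ Y) T''"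
    from Cons.IH[OF this(3)] obtain X' Y' where "T'' = X' @ Y'" "rl A P X X'" "rl A P Y Y'" by blast
    then show ?thesis using \<open>t = F A\<close> \<open>T' = P @ T''\<close> by (rule_tac x="P @ X'" in exI) (auto intro: rl.intros)
  next
    fix B T'' assume "t = F B" "T' = F B # T''" "rl A P (X @ Y) T''"
    from Cons.IH[OF this(3)] obtain X' Y' where "T'' = X' @ Y'" "rl A P X X'" "rl A P Y Y'" by blast
    then show ?thesis using \<open>t = F B\<close> \<open>T' = F B # T''\<close> by (rule_tac x="F B # X'" in exI) (auto intro: rl.intros)
  next
    fix Z Z' T'' assume "t = Br Z" "T' = Br Z' # T''" "rl A P Z Z'" "rl A P (X @ Y) T''"
    from Cons.IH[OF this(4)] obtain X' Y' where "T'' = X' @ Y'" "rl A P X X'" "rl A P Y Y'" by blast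
    then show ?thesis using \<open>t = Br Z\<close> \<open>T' = Br Z' # T''\<close> \<open>rl A P Z Z'\<close>
      by (rule_tac x="Br Z' # X'" in exI) (auto intro: rl.intros)
  qed
qed

lemma rl_nil_inv: "rl A P [] T' \<Longrightarrow> T' = []"
  by (erule rl.cases) auto

lemma rl_single: "rl A P [F B] T' \<Longrightarrow> T' = [F B] \<or> (B = A \<and> T' = P)"
  by (erule rl.cases) (auto dest: rl_nil_inv)

lemma rl_single_Br: "rl A P [Br X] T' \<Longrightarrow> \<exists>X'. T' = [Br X'] \<and> rl A P X X'"
  by (erule rl.cases) (auto dest: rl_nil_inv)

lemma rl_plug: "rc A P c c' \<Longrightarrow> rl A P X X' \<Longrightarrow> rl A P (plug c X) (plug c' X')"
  by (induction rule: rc.induct) (auto intro!: rl_append rl.intros)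

lemma rl_plug_split: "rl A P (plug c X) T' \<Longrightarrow> \<exists>c' X'. T' = plug c' X' \<and> rc A P c c' \<and> rl A P X X'"
proof (induction c arbitrary: T')
  case Hole then show ?case by (rule_tac x=Hole in exI) (auto intro: rc.intros)
next
  case (In G1 c G2)
  from In.prems have "rl A P (G1 @ [Br (plug c X)] @ G2) T'" by simp
  then obtain G1' Y G2' where T': "T' = G1' @ Y @ G2'" and r1: "rl A P G1 G1'" and "rl A P [Br (plug c X)] Y"
    and r2: "rl A P G2 G2'" by (metis rl_append_split)
  then obtain Z where Y: "Y = [Br Z]" and "rl A P (plug c X) Z" using rl_single_Br by blast
  from In.IH[OF this(2)] obtain c' X' where "Z = plug c' X'" "rc A P c c'" "rl A P X X'" by blast
  then show ?case using T' Y r1 r2 by (rule_tac x="In G1' c' G2'" in exI) (auto intro: rc.intros)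
qed

lemma rl_bangs: "rl A P (bangs As) T' \<Longrightarrow> (\<forall>A0. A = Bang A0 \<longrightarrow> (\<exists>Bs. P = bangs Bs \<and> Bs \<noteq> []))
  \<Longrightarrow> \<exists>As'. T' = bangs As' \<and> (As \<noteq> [] \<longrightarrow> As' \<noteq> [])"
proof (induction As arbitrary: T')
  case Nil then have "T' = []" by (simp add: rl_nil_inv)
  then show ?case by (rule_tac x="[]" in exI) simp
next
  case (Cons B As)
  from Cons.prems(1) have "rl A P ([F (Bang B)] @ bangs As) T'" by simp
  then obtain Y Z where T': "T' = Y @ Z" and y: "rl A P [F (Bang B)] Y" and z: "rl A P (bangs As) Z"
    by (metis rl_append_split)
  have "\<exists>As'. Z = bangs As' \<and> (As \<noteq> [] \<longrightarrow> As' \<noteq> [])"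
    by (rule Cons.IH[OF z Cons.prems(2)])
  then obtain Zs where Zs: "Z = bangs Zs" by blast
  from rl_single[OF y] show ?case
  proof
    assume "Y = [F (Bang B)]" then show ?thesis using T' Zs by (rule_tac x="B # Zs" in exI) simp
  next
    assume "Bang B = A \<and> Y = P"
    then obtain Bs where "Y = bangs Bs" "Bs \<noteq> []" using Cons.prems(2) by metis
    then show ?thesis using T' Zs by (rule_tac x="Bs @ Zs" in exI) simp
  qed
qed

lemma rl_cut1: "rl A P (plug c (G1 @ [F A] @ G2)) (plug c (G1 @ P @ G2))"
proof -
  have "rc A P c c" by (induction c) (auto intro: rc.intros rl_refl)
  moreover have "rl A P [F A] P" using rl_rep[OF rl_nil, of A P] by simp
  then have "rl A P (G1 @ [F A] @ G2) (G1 @ P @ G2)"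
    by (intro rl_append rl_refl)
  ultimately show ?thesis by (rule rl_plug)
qed



fun prin :: "fm \<Rightarrow> tt list \<Rightarrow> bool" where
  "prin (Var n) P = False"
| "prin One P = (P = [])"
| "prin (Over C B) P = Fd False (P @ [F B]) C"
| "prin (Under B C) P = Fd False (F B # P) C"
| "prin (Prod B C) P = (\<exists>P1 P2. P = P1 @ P2 \<and> Fd False P1 B \<and> Fd False P2 C)"
| "prin (Meet B C) P = (Fd False P B \<and> Fd False P C)"
| "prin (Join B C) P = (Fd False P B \<or> Fd False P C)"
| "prin (Diam B) P = (\<exists>X. P = [Br X] \<and> Fd False X B)"
| "prin (Box B) P = Fd False [Br P] B"
| "prin (Bang B) P = (\<exists>Bs. Bs \<noteq> [] \<and> P = bangs Bs \<and> Fd False (bangs Bs) B)"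

definition cutok :: "fm \<Rightarrow> bool" where
  "cutok A \<longleftrightarrow> (\<forall>P c G1 G2 D. Fd False P A \<longrightarrow> Fd False (plug c (G1 @ [F A] @ G2)) D
      \<longrightarrow> Fd False (plug c (G1 @ P @ G2)) D)"

lemma use_cut: "cutok A \<Longrightarrow> Fd False P A \<Longrightarrow> Fd False (plug c (G1 @ [F A] @ G2)) D
   \<Longrightarrow> Fd False (plug c (G1 @ P @ G2)) D"
  unfolding cutok_def by blast

lemma cut_by: "size B < size A \<Longrightarrow> (\<And>A'. size A' < size A \<Longrightarrow> cutok A') \<Longrightarrow> Fd False P B
  \<Longrightarrow> Fd False (plug c (G1 @ [F B] @ G2)) D \<Longrightarrow> Fd False (plug c (G1 @ P @ G2)) D"
  using use_cut by blast

lemma decompM: "rl A P (plug c (D1 @ M @ D2)) T' \<Longrightarrow> \<exists>c' D1' D2' M'. T' = plug c' (D1' @ M' @ D2')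
   \<and> rl A P M M' \<and> (\<forall>Z Z'. rl A P Z Z' \<longrightarrow> rl A P (plug c (D1 @ Z @ D2)) (plug c' (D1' @ Z' @ D2')))"
proof -
  assume "rl A P (plug c (D1 @ M @ D2)) T'"
  from rl_plug_split[OF this] obtain c' X' where T': "T' = plug c' X'" and rc: "rc A P c c'"
    and r: "rl A P (D1 @ M @ D2) X'" by blast
  from r obtain D1' Y where "X' = D1' @ Y" "rl A P D1 D1'" "rl A P (M @ D2) Y" using rl_append_split[OF r] by blast
  moreover from rl_append_split[OF this(3)] obtain M' D2' where "Y = M' @ D2'" "rl A P M M'" "rl A P D2 D2'" by blast
  ultimately show ?thesis using T' rc
    by (rule_tac x=c' in exI, rule_tac x=D1' in exI, rule_tac x=D2' in exI, rule_tac x=M' in exI)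
       (auto intro!: rl_plug rl_append)
qed

lemma decompE:
  assumes "rl A P (plug c (D1 @ M @ D2)) T'"
  obtains c' D1' M' D2' where "T' = plug c' (D1' @ M' @ D2')" "rl A P M M'"
    "\<And>Z Z'. rl A P Z Z' \<Longrightarrow> rl A P (plug c (D1 @ Z @ D2)) (plug c' (D1' @ Z' @ D2'))"
proof -
  from decompM[OF assms] obtain c' D1' D2' M' where "T' = plug c' (D1' @ M' @ D2')" "rl A P M M'"
    and "\<forall>Z Z'. rl A P Z Z' \<longrightarrow> rl A P (plug c (D1 @ Z @ D2)) (plug c' (D1' @ Z' @ D2'))"
    by (elim exE conjE) 
  then show ?thesis using that by blast
qed

lemma rl_appE:
  assumes "rl A P (X @ Y) T'"
  obtains X' Y' where "T' = X' @ Y'" "rl A P X X'" "rl A P Y Y'"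
  using rl_append_split[OF assms] by (elim exE conjE)

lemma pr_bang: "prin A P \<Longrightarrow> \<forall>A0. A = Bang A0 \<longrightarrow> (\<exists>Bs. P = bangs Bs \<and> Bs \<noteq> [])"
  by auto

lemma rl_one: "rl A P [F A] P"
  using rl_rep[OF rl_nil, of A P] by simp

lemma rphase:
  assumes IH: "\<And>A'. size A' < size A \<Longrightarrow> cutok A'" and L: "Fd False P A" and pr: "prin A P"
  shows "Fd False T D \<Longrightarrow> rl A P T T' \<Longrightarrow> Fd False T' D"
proof (induction arbitrary: T' rule: Fd.induct)
  case (ax A1)
  from rl_single[OF ax] show ?case
  proof
    assume "T' = [F A1]" then show ?thesis by (simp add: Fd.ax)
  next
    assume "A1 = A \<and> T' = P" then show ?thesis using L by simp
  qed
next
  case oneR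
  then have "T' = []" by (rule rl_nil_inv)
  then show ?case by (simp add: Fd.oneR)
next
  case (overL G B c D1 C D2 D)
  have pp: "rl A P (plug c (D1 @ ([F (Over C B)] @ G) @ D2)) T'" using overL.prems by simp
  obtain c' D1' D2' M' where T': "T' = plug c' (D1' @ M' @ D2')"
    and rM: "rl A P ([F (Over C B)] @ G) M'"
    and rZ: "\<And>Z Z'. rl A P Z Z' \<Longrightarrow> rl A P (plug c (D1 @ Z @ D2)) (plug c' (D1' @ Z' @ D2'))"
    using decompE[OF pp] by metis
  obtain Y G' where M': "M' = Y @ G'" and y: "rl A P [F (Over C B)] Y" and g: "rl A P G G'"
    by (rule rl_appE[OF rM])
  have p1: "Fd False G' B" using overL.IH(1)[OF g] .
  have p2: "Fd False (plug c' (D1' @ [F C] @ D2')) D" by (rule overL.IH(2)[OF rZ[OF rl_refl]])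
  from rl_single[OF y] show ?case
  proof
    assume "Y = [F (Over C B)]"
    then show ?thesis using Fd.overL[OF p1 p2] T' M' by simp
  next
    assume a: "Over C B = A \<and> Y = P"
    then have "Fd False (P @ [F B]) C" using pr by auto
    then have h: "Fd False (plug Hole (P @ [F B] @ [])) C" by simp
    have sB: "size B < size A" "size C < size A" using a by auto
    from cut_by[OF sB(1) IH p1 h] have "Fd False (plug Hole (P @ G' @ [])) C" .
    then have "Fd False (P @ G') C" by simp
    from cut_by[OF sB(2) IH this p2] show ?thesis using a T' M' by simp
  qed
next
  case (overR G B C)
  then show ?case by (auto intro!: Fd.overR rl_append rl_refl)
next
  case (underL G A1 c D1 C D2 D)
  have pp: "rl A P (plug c (D1 @ (G @ [F (Under A1 C)]) @ D2)) T'" using underL.prems by simp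
  obtain c' D1' D2' M' where T': "T' = plug c' (D1' @ M' @ D2')"
    and rM: "rl A P (G @ [F (Under A1 C)]) M'"
    and rZ: "\<And>Z Z'. rl A P Z Z' \<Longrightarrow> rl A P (plug c (D1 @ Z @ D2)) (plug c' (D1' @ Z' @ D2'))"
    using decompE[OF pp] by metis
  obtain Y G' where M': "M' = G' @ Y" and y: "rl A P [F (Under A1 C)] Y" and g: "rl A P G G'"
    by (rule rl_appE[OF rM])
  have p1: "Fd False G' A1" using underL.IH(1)[OF g] .
  have p2: "Fd False (plug c' (D1' @ [F C] @ D2')) D" by (rule underL.IH(2)[OF rZ[OF rl_refl]])
  from rl_single[OF y] show ?case
  proof
    assume "Y = [F (Under A1 C)]"
    then show ?thesis using Fd.underL[OF p1 p2] T' M' by simp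
  next
    assume a: "Under A1 C = A \<and> Y = P"
    then have h: "Fd False (plug Hole ([] @ [F A1] @ P)) C" using pr by auto
    have sB: "size A1 < size A" "size C < size A" using a by auto
    from cut_by[OF sB(1) IH p1 h] have "Fd False (plug Hole ([] @ G' @ P)) C" .
    then have "Fd False (G' @ P) C" by simp
    from cut_by[OF sB(2) IH this p2] show ?thesis using a T' M' by simp
  qed
next
  case (underR A1 G C)
  then show ?case by (auto intro!: Fd.underR rl_F)
next
  case (prodL c D1 A1 B1 D2 D)
  obtain c' D1' D2' M' where T': "T' = plug c' (D1' @ M' @ D2')"
    and y: "rl A P [F (Prod A1 B1)] M'"
    and rZ: "\<And>Z Z'. rl A P Z Z' \<Longrightarrow> rl A P (plug c (D1 @ Z @ D2)) (plug c' (D1' @ Z' @ D2'))"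
    using decompE[OF prodL.prems] by metis
  have p: "Fd False (plug c' (D1' @ [F A1, F B1] @ D2')) D" by (rule prodL.IH[OF rZ[OF rl_refl]])
  from rl_single[OF y] show ?case
  proof
    assume "M' = [F (Prod A1 B1)]"
    then show ?thesis using Fd.prodL[OF p] T' by simp
  next
    assume a: "Prod A1 B1 = A \<and> M' = P"
    then obtain P1 P2 where P: "P = P1 @ P2" "Fd False P1 A1" "Fd False P2 B1" using pr by auto
    have h: "Fd False (plug c' (D1' @ [F A1] @ ([F B1] @ D2'))) D" using p by simp
    have sB: "size A1 < size A" "size B1 < size A" using a by auto
    from cut_by[OF sB(1) IH P(2) h] have "Fd False (plug c' (D1' @ P1 @ ([F B1] @ D2'))) D" .
    then have "Fd False (plug c' ((D1' @ P1) @ [F B1] @ D2')) D" by simp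
    from cut_by[OF sB(2) IH P(3) this] have "Fd False (plug c' ((D1' @ P1) @ P2 @ D2')) D" .
    then show ?thesis using T' a P by simp
  qed
next
  case (prodR D0 A1 G B1)
  obtain X Y where "T' = X @ Y" "rl A P D0 X" "rl A P G Y" by (rule rl_appE[OF prodR.prems])
  then show ?case using prodR.IH by (auto intro: Fd.prodR)
next
  case (oneL c D1 D2 A1)
  obtain c' D1' D2' M' where T': "T' = plug c' (D1' @ M' @ D2')"
    and y: "rl A P [F One] M'"
    and rZ: "\<And>Z Z'. rl A P Z Z' \<Longrightarrow> rl A P (plug c (D1 @ Z @ D2)) (plug c' (D1' @ Z' @ D2'))"
    using decompE[OF oneL.prems] by metis
  have p: "Fd False (plug c' (D1' @ [] @ D2')) A1" using oneL.IH rZ[OF rl_nil] by simp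
  from rl_single[OF y] show ?case
  proof
    assume "M' = [F One]"
    then show ?thesis using Fd.oneL[OF p[simplified]] T' by simp
  next
    assume a: "One = A \<and> M' = P"
    then show ?thesis using pr p T' by auto
  qed
next
  case (joinL c D1 A1 D2 C A2)
  obtain c' D1' D2' M' where T': "T' = plug c' (D1' @ M' @ D2')"
    and y: "rl A P [F (Join A1 A2)] M'"
    and rZ: "\<And>Z Z'. rl A P Z Z' \<Longrightarrow> rl A P (plug c (D1 @ Z @ D2)) (plug c' (D1' @ Z' @ D2'))"
    using decompE[OF joinL.prems] by metis
  have p1: "Fd False (plug c' (D1' @ [F A1] @ D2')) C" by (rule joinL.IH(1)[OF rZ[OF rl_refl]])
  have p2: "Fd False (plug c' (D1' @ [F A2] @ D2')) C" by (rule joinL.IH(2)[OF rZ[OF rl_refl]])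
  from rl_single[OF y] show ?case
  proof
    assume "M' = [F (Join A1 A2)]"
    then show ?thesis using Fd.joinL[OF p1 p2] T' by simp
  next
    assume a: "Join A1 A2 = A \<and> M' = P"
    then have "Fd False P A1 \<or> Fd False P A2" using pr by auto
    then show ?thesis
    proof
      assume hh: "Fd False P A1"
      have sB: "size A1 < size A" using a by auto
      from cut_by[OF sB IH hh p1] show ?thesis using a T' by simp
    next
      assume hh: "Fd False P A2"
      have sB: "size A2 < size A" using a by auto
      from cut_by[OF sB IH hh p2] show ?thesis using a T' by simp
    qed
  qed
next
  case (joinR1 X A1 A2)
  then show ?case by (auto intro: Fd.joinR1)
next
  case (joinR2 X A2 A1)
  then show ?case by (auto intro: Fd.joinR2)
next
  case (meetL1 c D1 A1 D2 C A2)
  obtain c' D1' D2' M' where T': "T' = plug c' (D1' @ M' @ D2')"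
    and y: "rl A P [F (Meet A1 A2)] M'"
    and rZ: "\<And>Z Z'. rl A P Z Z' \<Longrightarrow> rl A P (plug c (D1 @ Z @ D2)) (plug c' (D1' @ Z' @ D2'))"
    using decompE[OF meetL1.prems] by metis
  have p1: "Fd False (plug c' (D1' @ [F A1] @ D2')) C" by (rule meetL1.IH(1)[OF rZ[OF rl_refl]])
  from rl_single[OF y] show ?case
  proof
    assume "M' = [F (Meet A1 A2)]"
    then show ?thesis using Fd.meetL1[OF p1] T' by simp
  next
    assume a: "Meet A1 A2 = A \<and> M' = P"
    then have hh: "Fd False P A1" using pr by auto
    have sB: "size A1 < size A" using a by auto
    from cut_by[OF sB IH hh p1] show ?thesis using a T' by simp
  qed
next
  case (meetL2 c D1 A2 D2 C A1)
  obtain c' D1' D2' M' where T': "T' = plug c' (D1' @ M' @ D2')"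
    and y: "rl A P [F (Meet A1 A2)] M'"
    and rZ: "\<And>Z Z'. rl A P Z Z' \<Longrightarrow> rl A P (plug c (D1 @ Z @ D2)) (plug c' (D1' @ Z' @ D2'))"
    using decompE[OF meetL2.prems] by metis
  have p1: "Fd False (plug c' (D1' @ [F A2] @ D2')) C" by (rule meetL2.IH(1)[OF rZ[OF rl_refl]])
  from rl_single[OF y] show ?case
  proof
    assume "M' = [F (Meet A1 A2)]"
    then show ?thesis using Fd.meetL2[OF p1] T' by simp
  next
    assume a: "Meet A1 A2 = A \<and> M' = P"
    then have hh: "Fd False P A2" using pr by auto
    have sB: "size A2 < size A" using a by auto
    from cut_by[OF sB IH hh p1] show ?thesis using a T' by simp
  qed
next
  case (meetR X A1 A2)
  then show ?case by (auto intro: Fd.meetR)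
next
  case (boxL c D1 A1 D2 B)
  obtain c' D1' D2' M' where T': "T' = plug c' (D1' @ M' @ D2')"
    and y0: "rl A P [Br [F (Box A1)]] M'"
    and rZ: "\<And>Z Z'. rl A P Z Z' \<Longrightarrow> rl A P (plug c (D1 @ Z @ D2)) (plug c' (D1' @ Z' @ D2'))"
    using decompE[OF boxL.prems] by metis
  from rl_single_Br[OF y0] obtain X' where M': "M' = [Br X']" and y: "rl A P [F (Box A1)] X'" by blast
  have p1: "Fd False (plug c' (D1' @ [F A1] @ D2')) B" by (rule boxL.IH(1)[OF rZ[OF rl_refl]])
  from rl_single[OF y] show ?case
  proof
    assume "X' = [F (Box A1)]"
    then show ?thesis using Fd.boxL[OF p1] T' M' by simp
  next
    assume a: "Box A1 = A \<and> X' = P"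
    then have hh: "Fd False [Br P] A1" using pr by auto
    have sB: "size A1 < size A" using a by auto
    from cut_by[OF sB IH hh p1] show ?thesis using a T' M' by simp
  qed
next
  case (boxR X A1)
  then show ?case by (auto intro!: Fd.boxR rl_Br rl_nil)
next
  case (diamL c D1 A1 D2 B)
  obtain c' D1' D2' M' where T': "T' = plug c' (D1' @ M' @ D2')"
    and y: "rl A P [F (Diam A1)] M'"
    and rZ: "\<And>Z Z'. rl A P Z Z' \<Longrightarrow> rl A P (plug c (D1 @ Z @ D2)) (plug c' (D1' @ Z' @ D2'))"
    using decompE[OF diamL.prems] by metis
  have p1: "Fd False (plug c' (D1' @ [Br [F A1]] @ D2')) B" by (rule diamL.IH(1)[OF rZ[OF rl_refl]])
  from rl_single[OF y] show ?case
  proof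
    assume "M' = [F (Diam A1)]"
    then show ?thesis using Fd.diamL[OF p1] T' by simp
  next
    assume a: "Diam A1 = A \<and> M' = P"
    then obtain X where X: "P = [Br X]" "Fd False X A1" using pr by auto
    have h: "Fd False (plug (cc c' (In D1' Hole D2')) ([] @ [F A1] @ [])) B" using p1 by (simp add: plug_cc)
    have sB: "size A1 < size A" using a by auto
    from cut_by[OF sB IH X(2) h] have "Fd False (plug (cc c' (In D1' Hole D2')) ([] @ X @ [])) B" .
    then show ?thesis using a X T' by (simp add: plug_cc)
  qed
next
  case (diamR X A1)
  from rl_single_Br[OF diamR.prems] obtain X' where "T' = [Br X']" "rl A P X X'" by blast
  then show ?case using diamR.IH by (auto intro: Fd.diamR)
next
  case (bangL c D1 A1 D2 C)
  obtain c' D1' D2' M' where T': "T' = plug c' (D1' @ M' @ D2')"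
    and y: "rl A P [F (Bang A1)] M'"
    and rZ: "\<And>Z Z'. rl A P Z Z' \<Longrightarrow> rl A P (plug c (D1 @ Z @ D2)) (plug c' (D1' @ Z' @ D2'))"
    using decompE[OF bangL.prems] by metis
  have p1: "Fd False (plug c' (D1' @ [F A1] @ D2')) C" by (rule bangL.IH(1)[OF rZ[OF rl_refl]])
  from rl_single[OF y] show ?case
  proof
    assume "M' = [F (Bang A1)]"
    then show ?thesis using Fd.bangL[OF p1] T' by simp
  next
    assume a: "Bang A1 = A \<and> M' = P"
    then obtain Bs where Bs: "P = bangs Bs" and hh: "Fd False (bangs Bs) A1" using pr by auto
    have sB: "size A1 < size A" using a by auto
    from cut_by[OF sB IH hh p1] show ?thesis using a T' Bs by simp
  qed
next
  case (bangP1 c D1 A1 P0 D2 C)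
  have pp: "rl A P (plug c (D1 @ (P0 @ [F (Bang A1)]) @ D2)) T'" using bangP1.prems by simp
  obtain c' D1' D2' M' where T': "T' = plug c' (D1' @ M' @ D2')"
    and rM: "rl A P (P0 @ [F (Bang A1)]) M'"
    and rZ: "\<And>Z Z'. rl A P Z Z' \<Longrightarrow> rl A P (plug c (D1 @ Z @ D2)) (plug c' (D1' @ Z' @ D2'))"
    using decompE[OF pp] by metis
  obtain P0' Y where M': "M' = P0' @ Y" and g: "rl A P P0 P0'" and y: "rl A P [F (Bang A1)] Y"
    by (rule rl_appE[OF rM])
  have y': "rl A P (bangs [A1]) Y" using y by simp
  obtain Ys where Y: "Y = bangs Ys" using rl_bangs[OF y' pr_bang[OF pr]] by blast
  have "rl A P ([F (Bang A1)] @ P0) (Y @ P0')" by (rule rl_append[OF y g])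
  from rZ[OF this] have "rl A P (plug c (D1 @ [F (Bang A1)] @ P0 @ D2)) (plug c' (D1' @ Y @ P0' @ D2'))" by simp
  from bangP1.IH[OF this] have "Fd False (plug c' (D1' @ bangs Ys @ P0' @ D2')) C" using Y by simp
  from bangs_move1[OF this] show ?case using T' M' Y by simp
next
  case (bangP2 c D1 P0 A1 D2 C)
  have pp: "rl A P (plug c (D1 @ ([F (Bang A1)] @ P0) @ D2)) T'" using bangP2.prems by simp
  obtain c' D1' D2' M' where T': "T' = plug c' (D1' @ M' @ D2')"
    and rM: "rl A P ([F (Bang A1)] @ P0) M'"
    and rZ: "\<And>Z Z'. rl A P Z Z' \<Longrightarrow> rl A P (plug c (D1 @ Z @ D2)) (plug c' (D1' @ Z' @ D2'))"
    using decompE[OF pp] by metis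
  obtain Y P0' where M': "M' = Y @ P0'" and y: "rl A P [F (Bang A1)] Y" and g: "rl A P P0 P0'"
    by (rule rl_appE[OF rM])
  have y': "rl A P (bangs [A1]) Y" using y by simp
  obtain Ys where Y: "Y = bangs Ys" using rl_bangs[OF y' pr_bang[OF pr]] by blast
  have "rl A P (P0 @ [F (Bang A1)]) (P0' @ Y)" by (rule rl_append[OF g y])
  from rZ[OF this] have "rl A P (plug c (D1 @ P0 @ [F (Bang A1)] @ D2)) (plug c' (D1' @ P0' @ Y @ D2'))" by simp
  from bangP2.IH[OF this] have "Fd False (plug c' (D1' @ P0' @ bangs Ys @ D2')) C" using Y by simp
  from bangs_move2[OF this] show ?case using T' M' Y by simp
next
  case (bangR As B)
  have "\<exists>As'. T' = bangs As' \<and> (As \<noteq> [] \<longrightarrow> As' \<noteq> [])"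
    by (rule rl_bangs[OF bangR.prems pr_bang[OF pr]])
  then obtain As' where "T' = bangs As'" "As' \<noteq> []" using bangR.hyps by blast
  then show ?case using bangR.IH bangR.prems by (auto intro: Fd.bangR)
next
  case (bangC As c G1 G2 G3 C)
  from rl_plug_split[OF bangC.prems] obtain c' X' where T': "T' = plug c' X'" and rc: "rc A P c c'"
    and r: "rl A P (bangs As @ G1 @ G2 @ G3) X'" by blast
  obtain Xa Y1 where e1: "X' = Xa @ Y1" and ra: "rl A P (bangs As) Xa"
    and y1: "rl A P (G1 @ G2 @ G3) Y1" by (rule rl_appE[OF r])
  obtain G1' Y2 where e2: "Y1 = G1' @ Y2" and r1: "rl A P G1 G1'"
    and y2: "rl A P (G2 @ G3) Y2" by (rule rl_appE[OF y1])
  obtain G2' G3' where e3: "Y2 = G2' @ G3'" and r2: "rl A P G2 G2'"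
    and r3: "rl A P G3 G3'" by (rule rl_appE[OF y2])
  have X': "X' = Xa @ G1' @ G2' @ G3'" using e1 e2 e3 by simp
  have "\<exists>As'. Xa = bangs As' \<and> (As \<noteq> [] \<longrightarrow> As' \<noteq> [])"
    by (rule rl_bangs[OF ra pr_bang[OF pr]])
  then obtain As' where Xa: "Xa = bangs As'" "As' \<noteq> []" using bangC.hyps by blast
  have "rl A P [Br (bangs As @ G2)] [Br (bangs As' @ G2')]"
    using ra r2 Xa by (auto intro!: rl_Br rl_nil rl_append)
  then have "rl A P (plug c (bangs As @ G1 @ [Br (bangs As @ G2)] @ G3))
      (plug c' (bangs As' @ G1' @ [Br (bangs As' @ G2')] @ G3'))"
  proof -
    have "rl A P (bangs As @ G1 @ [Br (bangs As @ G2)] @ G3) (bangs As' @ G1' @ [Br (bangs As' @ G2')] @ G3')"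
      using ra r1 r3 Xa \<open>rl A P [Br (bangs As @ G2)] [Br (bangs As' @ G2')]\<close> by (intro rl_append) auto
    then show ?thesis by (rule rl_plug[OF rc])
  qed
  from bangC.IH[OF this] have "Fd False (plug c' (bangs As' @ G1' @ [Br (bangs As' @ G2')] @ G3')) C" .
  from Fd.bangC[OF Xa(2) this] show ?case using T' X' Xa by simp
next
  case (cutR P A c G1 G2 C)
  then show ?case by simp
qed



lemma lphase: "Fd False P A \<Longrightarrow> (\<And>A'. size A' < size A \<Longrightarrow> cutok A')
  \<Longrightarrow> Fd False (plug cx (Gx1 @ [F A] @ Gx2)) Dx \<Longrightarrow> Fd False (plug cx (Gx1 @ P @ Gx2)) Dx"
proof (induction arbitrary: cx Gx1 Gx2 Dx rule: Fd.induct)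
  case (ax A) then show ?case by simp
next
  case oneR
  have "prin One []" by simp
  from rphase[OF oneR.prems(1) Fd.oneR this oneR.prems(2) rl_cut1] show ?case .
next
  case (overL G B c2 D1 C D2 A0)
  obtain c' L R where eq: "\<forall>Y. plug cx (Gx1 @ plug c2 (D1 @ Y @ D2) @ Gx2) = plug c' (L @ Y @ R)"
    using ctx_comb by blast
  from overL.IH(2)[OF overL.prems] have "Fd False (plug c' (L @ [F C] @ R)) Dx" using eq by metis
  from Fd.overL[OF overL.hyps(1) this] have "Fd False (plug c' (L @ ([F (Over C B)] @ G) @ R)) Dx" by simp
  then show ?case using eq by (metis append.assoc)
next
  case (overR G B C)
  have "prin (Over C B) G" using overR.hyps by simp
  from rphase[OF overR.prems(1) Fd.overR[OF overR.hyps] this overR.prems(2) rl_cut1] show ?case .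
next
  case (underL G A1 c2 D1 C D2 A0)
  obtain c' L R where eq: "\<forall>Y. plug cx (Gx1 @ plug c2 (D1 @ Y @ D2) @ Gx2) = plug c' (L @ Y @ R)"
    using ctx_comb by blast
  from underL.IH(2)[OF underL.prems] have "Fd False (plug c' (L @ [F C] @ R)) Dx" using eq by metis
  from Fd.underL[OF underL.hyps(1) this] have "Fd False (plug c' (L @ (G @ [F (Under A1 C)]) @ R)) Dx" by simp
  then show ?case using eq by (metis append.assoc)
next
  case (underR A1 G C)
  have "prin (Under A1 C) G" using underR.hyps by simp
  from rphase[OF underR.prems(1) Fd.underR[OF underR.hyps] this underR.prems(2) rl_cut1] show ?case .
next
  case (prodL c2 D1 A1 B1 D2 A0)
  obtain c' L R where eq: "\<forall>Y. plug cx (Gx1 @ plug c2 (D1 @ Y @ D2) @ Gx2) = plug c' (L @ Y @ R)"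
    using ctx_comb by blast
  from prodL.IH[OF prodL.prems] have "Fd False (plug c' (L @ [F A1, F B1] @ R)) Dx" using eq by metis
  from Fd.prodL[OF this] have "Fd False (plug c' (L @ [F (Prod A1 B1)] @ R)) Dx" by simp
  then show ?case using eq by metis
next
  case (prodR D0 A1 G B1)
  have "prin (Prod A1 B1) (D0 @ G)" using prodR.hyps by auto
  from rphase[OF prodR.prems(1) Fd.prodR[OF prodR.hyps] this prodR.prems(2) rl_cut1] show ?case .
next
  case (oneL c2 D1 D2 A0)
  obtain c' L R where eq: "\<forall>Y. plug cx (Gx1 @ plug c2 (D1 @ Y @ D2) @ Gx2) = plug c' (L @ Y @ R)"
    using ctx_comb by blast
  from oneL.IH[OF oneL.prems] have "Fd False (plug c' (L @ [] @ R)) Dx" using eq by (metis append.left_neutral)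
  from Fd.oneL[OF this] have "Fd False (plug c' (L @ [F One] @ R)) Dx" by simp
  then show ?case using eq by metis
next
  case (joinL c2 D1 A1 D2 A0 A2)
  obtain c' L R where eq: "\<forall>Y. plug cx (Gx1 @ plug c2 (D1 @ Y @ D2) @ Gx2) = plug c' (L @ Y @ R)"
    using ctx_comb by blast
  from joinL.IH(1)[OF joinL.prems] have h1: "Fd False (plug c' (L @ [F A1] @ R)) Dx" using eq by metis
  from joinL.IH(2)[OF joinL.prems] have h2: "Fd False (plug c' (L @ [F A2] @ R)) Dx" using eq by metis
  from Fd.joinL[OF h1 h2] have "Fd False (plug c' (L @ [F (Join A1 A2)] @ R)) Dx" by simp
  then show ?case using eq by metis
next
  case (joinR1 X A1 A2)
  have "prin (Join A1 A2) X" using joinR1.hyps by simp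
  from rphase[OF joinR1.prems(1) Fd.joinR1[OF joinR1.hyps] this joinR1.prems(2) rl_cut1] show ?case .
next
  case (joinR2 X A2 A1)
  have "prin (Join A1 A2) X" using joinR2.hyps by simp
  from rphase[OF joinR2.prems(1) Fd.joinR2[OF joinR2.hyps] this joinR2.prems(2) rl_cut1] show ?case .
next
  case (meetL1 c2 D1 A1 D2 A0 A2)
  obtain c' L R where eq: "\<forall>Y. plug cx (Gx1 @ plug c2 (D1 @ Y @ D2) @ Gx2) = plug c' (L @ Y @ R)"
    using ctx_comb by blast
  from meetL1.IH[OF meetL1.prems] have "Fd False (plug c' (L @ [F A1] @ R)) Dx" using eq by metis
  from Fd.meetL1[OF this] have "Fd False (plug c' (L @ [F (Meet A1 A2)] @ R)) Dx" by simp
  then show ?case using eq by metis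
next
  case (meetL2 c2 D1 A2 D2 A0 A1)
  obtain c' L R where eq: "\<forall>Y. plug cx (Gx1 @ plug c2 (D1 @ Y @ D2) @ Gx2) = plug c' (L @ Y @ R)"
    using ctx_comb by blast
  from meetL2.IH[OF meetL2.prems] have "Fd False (plug c' (L @ [F A2] @ R)) Dx" using eq by metis
  from Fd.meetL2[OF this] have "Fd False (plug c' (L @ [F (Meet A1 A2)] @ R)) Dx" by simp
  then show ?case using eq by metis
next
  case (meetR X A1 A2)
  have "prin (Meet A1 A2) X" using meetR.hyps by simp
  from rphase[OF meetR.prems(1) Fd.meetR[OF meetR.hyps] this meetR.prems(2) rl_cut1] show ?case .
next
  case (boxL c2 D1 A1 D2 A0)
  obtain c' L R where eq: "\<forall>Y. plug cx (Gx1 @ plug c2 (D1 @ Y @ D2) @ Gx2) = plug c' (L @ Y @ R)"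
    using ctx_comb by blast
  from boxL.IH[OF boxL.prems] have "Fd False (plug c' (L @ [F A1] @ R)) Dx" using eq by metis
  from Fd.boxL[OF this] have "Fd False (plug c' (L @ [Br [F (Box A1)]] @ R)) Dx" by simp
  then show ?case using eq by metis
next
  case (boxR X A1)
  have "prin (Box A1) X" using boxR.hyps by simp
  from rphase[OF boxR.prems(1) Fd.boxR[OF boxR.hyps] this boxR.prems(2) rl_cut1] show ?case .
next
  case (diamL c2 D1 A1 D2 A0)
  obtain c' L R where eq: "\<forall>Y. plug cx (Gx1 @ plug c2 (D1 @ Y @ D2) @ Gx2) = plug c' (L @ Y @ R)"
    using ctx_comb by blast
  from diamL.IH[OF diamL.prems] have "Fd False (plug c' (L @ [Br [F A1]] @ R)) Dx" using eq by metis
  from Fd.diamL[OF this] have "Fd False (plug c' (L @ [F (Diam A1)] @ R)) Dx" by simp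
  then show ?case using eq by metis
next
  case (diamR X A1)
  have "prin (Diam A1) [Br X]" using diamR.hyps by simp
  from rphase[OF diamR.prems(1) Fd.diamR[OF diamR.hyps] this diamR.prems(2) rl_cut1] show ?case .
next
  case (bangL c2 D1 A1 D2 A0)
  obtain c' L R where eq: "\<forall>Y. plug cx (Gx1 @ plug c2 (D1 @ Y @ D2) @ Gx2) = plug c' (L @ Y @ R)"
    using ctx_comb by blast
  from bangL.IH[OF bangL.prems] have "Fd False (plug c' (L @ [F A1] @ R)) Dx" using eq by metis
  from Fd.bangL[OF this] have "Fd False (plug c' (L @ [F (Bang A1)] @ R)) Dx" by simp
  then show ?case using eq by metis
next
  case (bangP1 c2 D1 A1 P0 D2 A0)
  obtain c' L R where eq: "\<forall>Y. plug cx (Gx1 @ plug c2 (D1 @ Y @ D2) @ Gx2) = plug c' (L @ Y @ R)"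
    using ctx_comb by blast
  from bangP1.IH[OF bangP1.prems] have "Fd False (plug c' (L @ ([F (Bang A1)] @ P0) @ R)) Dx"
    using eq by (metis append.assoc)
  then have "Fd False (plug c' (L @ [F (Bang A1)] @ P0 @ R)) Dx" by simp
  from Fd.bangP1[OF this] have "Fd False (plug c' (L @ (P0 @ [F (Bang A1)]) @ R)) Dx" by simp
  then show ?case using eq by (metis append.assoc)
next
  case (bangP2 c2 D1 P0 A1 D2 A0)
  obtain c' L R where eq: "\<forall>Y. plug cx (Gx1 @ plug c2 (D1 @ Y @ D2) @ Gx2) = plug c' (L @ Y @ R)"
    using ctx_comb by blast
  from bangP2.IH[OF bangP2.prems] have "Fd False (plug c' (L @ (P0 @ [F (Bang A1)]) @ R)) Dx"
    using eq by (metis append.assoc)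
  then have "Fd False (plug c' (L @ P0 @ [F (Bang A1)] @ R)) Dx" by simp
  from Fd.bangP2[OF this] have "Fd False (plug c' (L @ ([F (Bang A1)] @ P0) @ R)) Dx" by simp
  then show ?case using eq by (metis append.assoc)
next
  case (bangR As B)
  have "prin (Bang B) (bangs As)" using bangR.hyps by auto
  from rphase[OF bangR.prems(1) Fd.bangR[OF bangR.hyps] this bangR.prems(2) rl_cut1] show ?case .
next
  case (bangC As c2 H1 H2 H3 A0)
  obtain c' L R where eq: "\<forall>Y. plug cx (Gx1 @ plug c2 ([] @ Y @ []) @ Gx2) = plug c' (L @ Y @ R)"
    using ctx_comb by blast
  from bangC.IH[OF bangC.prems] have "Fd False (plug c' (L @ (bangs As @ H1 @ [Br (bangs As @ H2)] @ H3) @ R)) Dx"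
    using eq by (metis append.left_neutral append_Nil2)
  then have "Fd False (plug c' ([] @ L @ bangs As @ (H1 @ [Br (bangs As @ H2)] @ H3 @ R))) Dx" by simp
  from bangs_move2[OF this] have "Fd False (plug c' (bangs As @ (L @ H1) @ [Br (bangs As @ H2)] @ (H3 @ R))) Dx"
    by simp
  from Fd.bangC[OF bangC.hyps(1) this] have "Fd False (plug c' ([] @ bangs As @ L @ (H1 @ H2 @ H3 @ R))) Dx"
    by simp
  from bangs_move1[OF this] have "Fd False (plug c' (L @ (bangs As @ H1 @ H2 @ H3) @ R)) Dx" by simp
  then show ?case using eq by (metis append.left_neutral append_Nil2)
next
  case (cutR P A c G1 G2 C)
  then show ?case by simp
qed

lemma cut_all: "cutok A"
proof (induction A rule: measure_induct_rule[of size])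
  case (less A)
  show ?case unfolding cutok_def
    using lphase less by blast
qed

lemma cut_elim: "Fd True X C \<Longrightarrow> Fd False X C"
proof (induction rule: Fd.induct)
  case (cutR P A c G1 G2 C)
  then show ?case using use_cut[OF cut_all] by blast
qed (blast intro: Fd.intros)+



definition lst :: "fm multiset \<Rightarrow> fm list" where "lst z = (SOME L. mset L = z)"

lemma mset_lst[simp]: "mset (lst z) = z"
  unfolding lst_def by (rule someI_ex) (rule ex_mset)

lemma lst_empty[simp]: "lst {#} = []"
  by (metis mset_lst mset_zero_iff)

lemma lst_ne: "z \<noteq> {#} \<Longrightarrow> lst z \<noteq> []"
  by (metis mset_lst mset.simps(1))

primrec trs :: "stt \<Rightarrow> tt" where
  "trs (SF A) = F A"
| "trs (SBr z G) = Br (bangs (lst z) @ map trs G)"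

definition trm :: "mf \<Rightarrow> tt list" where "trm S = bangs (lst (fst S)) @ map trs (snd S)"

primrec trc :: "sctx \<Rightarrow> ctx" where
  "trc SHole = Hole"
| "trc (SIn z' G1 c G2) = In (bangs (lst z') @ map trs G1) (trc c) (map trs G2)"

lemma trs_case: "trs (case_prod SBr p) = Br (trm p)"
  by (cases p) (simp add: trm_def)

lemma trm_splug: "trm (splug c z G) = plug (trc c) (bangs (lst z) @ map trs G)"
  by (induction c) (simp_all add: trm_def trs_case)

lemma trm_pair: "trm (z, G) = bangs (lst z) @ map trs G"
  by (simp add: trm_def)

lemma trs_emb: "trs (emb t) = t"
proof (induction t)
  case (F x) then show ?case by simp
next
  case (Br G) then show ?case by (simp add: map_idI)
qed

lemma trm_emb: "trm ({#}, map emb X) = X"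
  by (simp add: trm_def trs_emb map_idI)

lemma merge2: "Fd b (plug c (bangs L1 @ X1 @ bangs L2 @ X2)) C \<Longrightarrow> mset L = mset L1 + mset L2
  \<Longrightarrow> Fd b (plug c (bangs L @ X1 @ X2)) C"
proof -
  assume h: "Fd b (plug c (bangs L1 @ X1 @ bangs L2 @ X2)) C" and m: "mset L = mset L1 + mset L2"
  from bangs_move2[of b c "bangs L1" X1 L2 X2 C] h have "Fd b (plug c ([] @ bangs (L1 @ L2) @ X1 @ X2)) C" by simp
  from bangs_perm[OF _ this, of L] m show ?thesis by (simp add: union_commute)
qed

lemma Md_to_Fd: "Md b S C \<Longrightarrow> Fd True (trm S) C"
proof (induction rule: Md.induct)
  case (ax A) then show ?case by (simp add: trm_def Fd.ax)
next
  case oneR then show ?case by (simp add: trm_def Fd.oneR)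
next
  case (overL z1 G B c z2 D1 C D2 D)
  have h1: "Fd True (bangs (lst z1) @ map trs G) B" using overL.IH(1) by (simp add: trm_pair)
  have h2: "Fd True (plug (trc c) ((bangs (lst z2) @ map trs D1) @ [F C] @ map trs D2)) D"
    using overL.IH(2) by (simp add: trm_splug)
  from Fd.overL[OF h1 h2]
  have "Fd True (plug (trc c) (bangs (lst z2) @ (map trs D1 @ [F (Over C B)]) @ bangs (lst z1) @ (map trs G @ map trs D2))) D"
    by simp
  from merge2[OF this, of "lst (z1 + z2)"] show ?case by (simp add: trm_splug)
next
  case (overR z G B C)
  then show ?case by (simp add: trm_pair Fd.overR)
next
  case (underL z1 G A c z2 D1 C D2 D)
  have h1: "Fd True (bangs (lst z1) @ map trs G) A" using underL.IH(1) by (simp add: trm_pair)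
  have h2: "Fd True (plug (trc c) ((bangs (lst z2) @ map trs D1) @ [F C] @ map trs D2)) D"
    using underL.IH(2) by (simp add: trm_splug)
  from Fd.underL[OF h1 h2]
  have "Fd True (plug (trc c) (bangs (lst z2) @ map trs D1 @ bangs (lst z1) @ (map trs G @ [F (Under A C)] @ map trs D2))) D"
    by simp
  from merge2[OF this, of "lst (z1 + z2)"] show ?case by (simp add: trm_splug)
next
  case (underR z A G C)
  from underR.IH have "Fd True (plug Hole ([] @ bangs (lst z) @ [F A] @ map trs G)) C" by (simp add: trm_pair)
  from bangs_move1[OF this] have "Fd True (F A # bangs (lst z) @ map trs G) C" by simp
  from Fd.underR[OF this] show ?case by (simp add: trm_pair)
next
  case (prodL c z D1 A B D2 D)
  from prodL.IH have "Fd True (plug (trc c) ((bangs (lst z) @ map trs D1) @ [F A, F B] @ map trs D2)) D"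
    by (simp add: trm_splug)
  from Fd.prodL[OF this] show ?case by (simp add: trm_splug)
next
  case (prodR z1 D A z2 G B)
  from Fd.prodR[OF prodR.IH(1) prodR.IH(2)]
  have "Fd True (plug Hole (bangs (lst z1) @ map trs D @ bangs (lst z2) @ map trs G)) (Prod A B)"
    by (simp add: trm_pair)
  from merge2[OF this, of "lst (z1 + z2)"] show ?case by (simp add: trm_pair)
next
  case (oneL c z D1 D2 A)
  from oneL.IH have "Fd True (plug (trc c) ((bangs (lst z) @ map trs D1) @ map trs D2)) A"
    by (simp add: trm_splug)
  from Fd.oneL[OF this] show ?case by (simp add: trm_splug)
next
  case (joinL c z D1 A1 D2 C A2)
  from joinL.IH have h1: "Fd True (plug (trc c) ((bangs (lst z) @ map trs D1) @ [F A1] @ map trs D2)) C"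
    and h2: "Fd True (plug (trc c) ((bangs (lst z) @ map trs D1) @ [F A2] @ map trs D2)) C"
    by (simp_all add: trm_splug)
  from Fd.joinL[OF h1 h2] show ?case by (simp add: trm_splug)
next
  case (joinR1 X A1 A2)
  then show ?case by (simp add: Fd.joinR1)
next
  case (joinR2 X A2 A1)
  then show ?case by (simp add: Fd.joinR2)
next
  case (meetL1 c z D1 A1 D2 C A2)
  from meetL1.IH have "Fd True (plug (trc c) ((bangs (lst z) @ map trs D1) @ [F A1] @ map trs D2)) C"
    by (simp add: trm_splug)
  from Fd.meetL1[OF this] show ?case by (simp add: trm_splug)
next
  case (meetL2 c z D1 A2 D2 C A1)
  from meetL2.IH have "Fd True (plug (trc c) ((bangs (lst z) @ map trs D1) @ [F A2] @ map trs D2)) C"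
    by (simp add: trm_splug)
  from Fd.meetL2[OF this] show ?case by (simp add: trm_splug)
next
  case (meetR X A1 A2)
  then show ?case by (simp add: Fd.meetR)
next
  case (boxL c z D1 A D2 B)
  from boxL.IH have "Fd True (plug (trc c) ((bangs (lst z) @ map trs D1) @ [F A] @ map trs D2)) B"
    by (simp add: trm_splug)
  from Fd.boxL[OF this] show ?case by (simp add: trm_splug)
next
  case (boxR X A)
  from boxR.IH have "Fd True [Br (trm X)] A" by (simp add: trm_def trs_case)
  from Fd.boxR[OF this] show ?case .
next
  case (diamL c z D1 A D2 B)
  from diamL.IH have "Fd True (plug (trc c) ((bangs (lst z) @ map trs D1) @ [Br [F A]] @ map trs D2)) B"
    by (simp add: trm_splug)
  from Fd.diamL[OF this] show ?case by (simp add: trm_splug)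
next
  case (diamR X A)
  from Fd.diamR[OF diamR.IH] show ?case by (simp add: trm_def trs_case)
next
  case (bangL c z A G1 G2 B)
  from bangL.IH have "Fd True (plug (trc c) ([] @ bangs (lst (z + {#A#})) @ map trs G1 @ map trs G2)) B"
    by (simp add: trm_splug)
  from bangs_perm[OF _ this, of "lst z @ [A]"]
  have "Fd True (plug (trc c) (bangs (lst z) @ bangs [A] @ map trs G1 @ map trs G2)) B" by simp
  from bangs_move1[OF this] show ?case by (simp add: trm_splug)
next
  case (bangP c z G1 A G2 B)
  from bangP.IH have "Fd True (plug (trc c) ((bangs (lst z) @ map trs G1) @ [F A] @ map trs G2)) B"
    by (simp add: trm_splug)
  from Fd.bangL[OF this]
  have "Fd True (plug (trc c) (bangs (lst z) @ map trs G1 @ bangs [A] @ map trs G2)) B" by simp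
  from bangs_move2[OF this] have "Fd True (plug (trc c) ([] @ bangs (lst z @ [A]) @ map trs G1 @ map trs G2)) B"
    by simp
  from bangs_perm[OF _ this, of "lst (z + {#A#})"] show ?case by (simp add: trm_splug)
next
  case (bangR' z B)
  from bangR'.IH have "Fd True (bangs (lst z)) B" by (simp add: trm_def)
  from Fd.bangR[OF lst_ne[OF bangR'.hyps(1)] this] show ?case by (simp add: trm_def)
next
  case (bangC' z2 c z1 G1 z' G2 G3 C)
  from bangC'.IH have "Fd True (plug (trc c) ([] @ bangs (lst (z1 + z2)) @
      (map trs G1 @ [Br (bangs (lst (z' + z2)) @ map trs G2)] @ map trs G3))) C"
    by (simp add: trm_splug)
  from bangs_perm[OF _ this, of "lst z2 @ lst z1"]
  have "Fd True (plug (trc c) ((bangs (lst z2) @ bangs (lst z1) @ map trs G1) @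
      [Br ([] @ bangs (lst (z' + z2)) @ map trs G2)] @ map trs G3)) C" by (simp add: union_commute)
  then have "Fd True (plug (cc (trc c) (In (bangs (lst z2) @ bangs (lst z1) @ map trs G1) Hole (map trs G3)))
      ([] @ bangs (lst (z' + z2)) @ map trs G2)) C" by (simp add: plug_cc)
  from bangs_perm[OF _ this, of "lst z2 @ lst z'"]
  have "Fd True (plug (trc c) (bangs (lst z2) @ (bangs (lst z1) @ map trs G1) @
      [Br (bangs (lst z2) @ (bangs (lst z') @ map trs G2))] @ map trs G3)) C"
    by (simp add: plug_cc union_commute)
  from Fd.bangC[OF lst_ne[OF bangC'.hyps(1)] this]
  have "Fd True (plug (trc c) ((bangs (lst z2) @ bangs (lst z1)) @ map trs G1 @ bangs (lst z') @ (map trs G2 @ map trs G3))) C"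
    by simp
  from bangs_move2[OF this]
  have "Fd True (plug (trc c) ([] @ bangs (lst z2 @ lst z1 @ lst z') @ (map trs G1 @ map trs G2 @ map trs G3))) C"
    by simp
  from bangs_perm[OF _ this, of "lst (z1 + z2 + z')"] show ?case by (simp add: trm_splug union_ac)
next
  case (cutR x P A c z G1 G2 C)
  have h1: "Fd True (bangs (lst x) @ map trs P) A" using cutR.IH(1) by (simp add: trm_pair)
  have h2: "Fd True (plug (trc c) ((bangs (lst z) @ map trs G1) @ [F A] @ map trs G2)) C"
    using cutR.IH(2) by (simp add: trm_splug)
  from Fd.cutR[of True, OF _ h1 h2]
  have "Fd True (plug (trc c) (bangs (lst z) @ map trs G1 @ bangs (lst x) @ (map trs P @ map trs G2))) C"
    by simp
  from merge2[OF this, of "lst (x + z)"] show ?case by (simp add: trm_splug union_commute)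
qed



inductive St :: "tt list \<Rightarrow> mf \<Rightarrow> bool" where
  St_nil: "St [] ({#}, [])"
| St_bang: "St T (z, G) \<Longrightarrow> St (F (Bang A) # T) (z + {#A#}, G)"
| St_F: "St T (z, G) \<Longrightarrow> St (F B # T) (z, SF B # G)"
| St_Br: "St X (z', G') \<Longrightarrow> St T (z, G) \<Longrightarrow> St (Br X # T) (z, SBr z' G' # G)"

inductive Sc :: "ctx \<Rightarrow> sctx \<Rightarrow> bool" where
  "Sc Hole SHole"
| "St G1 (z1, G1') \<Longrightarrow> Sc c c' \<Longrightarrow> St G2 (z2, G2') \<Longrightarrow> Sc (In G1 c G2) (SIn (z1 + z2) G1' c' G2')"

lemma St_emb_aux: "St T ({#}, map emb T) \<Longrightarrow> St (t # T) ({#}, map emb (t # T))"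
proof (induction t arbitrary: T)
  case (F B) then show ?case by (simp add: St_F)
next
  case (Br X)
  have "\<forall>Y. set Y \<subseteq> set X \<longrightarrow> St Y ({#}, map emb Y)"
  proof
    fix Y show "set Y \<subseteq> set X \<longrightarrow> St Y ({#}, map emb Y)"
      using Br.IH by (induction Y) (auto intro: St_nil)
  qed
  then have "St X ({#}, map emb X)" by blast
  then show ?case using Br.prems by (simp add: St_Br)
qed

lemma St_emb: "St X ({#}, map emb X)"
proof (induction X)
  case Nil then show ?case by (simp add: St_nil)
next
  case (Cons t X) then show ?case by (rule St_emb_aux)
qed

lemma St_nil_inv: "St [] S \<Longrightarrow> S = ({#}, [])"
  by (erule St.cases) auto

lemma St_Cons_inv: "St (t # T) S \<Longrightarrow>
   (\<exists>A z G. t = F (Bang A) \<and> S = (z + {#A#}, G) \<and> St T (z, G)) \<or>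
   (\<exists>B z G. t = F B \<and> S = (z, SF B # G) \<and> St T (z, G)) \<or>
   (\<exists>X z' G' z G. t = Br X \<and> S = (z, SBr z' G' # G) \<and> St X (z', G') \<and> St T (z, G))"
  by (erule St.cases) auto

lemma St_append: "St X (z1, G1) \<Longrightarrow> St Y (z2, G2) \<Longrightarrow> St (X @ Y) (z1 + z2, G1 @ G2)"
proof (induction X arbitrary: z1 G1)
  case Nil then show ?case by (auto dest: St_nil_inv)
next
  case (Cons t X)
  from St_Cons_inv[OF Cons.prems(1)] show ?case
  proof (elim disjE exE conjE)
    fix A z G assume "t = F (Bang A)" "(z1, G1) = (z + {#A#}, G)" "St X (z, G)"
    from St.St_bang[OF Cons.IH[OF this(3) Cons.prems(2)], of A] show ?thesis
      using \<open>t = F (Bang A)\<close> \<open>(z1, G1) = (z + {#A#}, G)\<close> by (simp add: ac_simps)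
  next
    fix B z G assume "t = F B" "(z1, G1) = (z, SF B # G)" "St X (z, G)"
    from St.St_F[OF Cons.IH[OF this(3) Cons.prems(2)], of B] show ?thesis
      using \<open>t = F B\<close> \<open>(z1, G1) = (z, SF B # G)\<close> by simp
  next
    fix Z z' G' z G assume "t = Br Z" "(z1, G1) = (z, SBr z' G' # G)" "St Z (z', G')" "St X (z, G)"
    from St.St_Br[OF this(3) Cons.IH[OF this(4) Cons.prems(2)]] show ?thesis
      using \<open>t = Br Z\<close> \<open>(z1, G1) = (z, SBr z' G' # G)\<close> by simp
  qed
qed

lemma St_append_split: "St (X @ Y) S \<Longrightarrow> \<exists>z1 z2 G1 G2. S = (z1 + z2, G1 @ G2) \<and> St X (z1, G1) \<and> St Y (z2, G2)"
proof (induction X arbitrary: S)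
  case Nil then show ?case by (cases S) (metis St_nil add_0 append_Nil)
next
  case (Cons t X)
  from St_Cons_inv[OF Cons.prems[simplified]] show ?case
  proof (elim disjE exE conjE)
    fix A z G assume a: "t = F (Bang A)" "S = (z + {#A#}, G)" "St (X @ Y) (z, G)"
    from Cons.IH[OF a(3)] obtain z1 z2 G1 G2 where "(z, G) = (z1 + z2, G1 @ G2)" "St X (z1, G1)" "St Y (z2, G2)" by blast
    then show ?thesis using a St.St_bang[of X z1 G1 A]
      by (rule_tac x="z1 + {#A#}" in exI, rule_tac x=z2 in exI, rule_tac x=G1 in exI, rule_tac x=G2 in exI)
         (simp add: ac_simps)
  next
    fix B z G assume a: "t = F B" "S = (z, SF B # G)" "St (X @ Y) (z, G)"
    from Cons.IH[OF a(3)] obtain z1 z2 G1 G2 where "(z, G) = (z1 + z2, G1 @ G2)" "St X (z1, G1)" "St Y (z2, G2)" by blast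
    then show ?thesis using a St.St_F[of X z1 G1 B]
      by (rule_tac x="z1" in exI, rule_tac x=z2 in exI, rule_tac x="SF B # G1" in exI, rule_tac x=G2 in exI)
         simp
  next
    fix Z z' G' z G assume a: "t = Br Z" "S = (z, SBr z' G' # G)" "St Z (z', G')" "St (X @ Y) (z, G)"
    from Cons.IH[OF a(4)] obtain z1 z2 G1 G2 where "(z, G) = (z1 + z2, G1 @ G2)" "St X (z1, G1)" "St Y (z2, G2)" by blast
    then show ?thesis using a St.St_Br[of Z z' G' X z1 G1]
      by (rule_tac x="z1" in exI, rule_tac x=z2 in exI, rule_tac x="SBr z' G' # G1" in exI, rule_tac x=G2 in exI)
         simp
  qed
qed

lemma St_appE:
  assumes "St (X @ Y) S"
  obtains z1 G1 z2 G2 where "S = (z1 + z2, G1 @ G2)" "St X (z1, G1)" "St Y (z2, G2)"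
  using St_append_split[OF assms] by blast

lemma St_single: "St [F B] S \<Longrightarrow> S = ({#}, [SF B]) \<or> (\<exists>A. B = Bang A \<and> S = ({#A#}, []))"
  by (drule St_Cons_inv) (auto dest: St_nil_inv)

lemma St_single_Br: "St [Br X] S \<Longrightarrow> \<exists>z' G'. S = ({#}, [SBr z' G']) \<and> St X (z', G')"
  by (drule St_Cons_inv) (auto dest: St_nil_inv)

lemma St_one: "St [F B] ({#}, [SF B])"
  using St_F[OF St_nil] by simp

lemma St_oneB: "St [F (Bang A)] ({#A#}, [])"
  using St_bang[OF St_nil] by simp

lemma St_oneBr: "St X (z, G) \<Longrightarrow> St [Br X] ({#}, [SBr z G])"
  using St_Br[OF _ St_nil] by simp

lemma St_plug: "Sc c c' \<Longrightarrow> St X (z, G) \<Longrightarrow> St (plug c X) (splug c' z G)"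
proof (induction arbitrary: X z G rule: Sc.induct)
  case 1 then show ?case by simp
next
  case (2 G1 z1 G1' c c' G2 z2 G2')
  obtain a b where ab: "splug c' z G = (a, b)" by (cases "splug c' z G")
  from 2(4)[OF 2(5)] ab have "St [Br (plug c X)] ({#}, [SBr a b])" by (simp add: St_oneBr)
  from St_append[OF 2(1) St_append[OF this 2(3)]] show ?case using ab by simp
qed

lemma St_plug_split: "St (plug c X) S \<Longrightarrow> \<exists>c' z G. S = splug c' z G \<and> Sc c c' \<and> St X (z, G)"
proof (induction c arbitrary: S)
  case Hole then show ?case by (cases S) (metis Sc.intros(1) plug.simps(1) splug.simps(1))
next
  case (In G1 c G2)
  from In.prems have "St (G1 @ [Br (plug c X)] @ G2) S" by simp
  then obtain z1 Y1 zr Yr where S: "S = (z1 + zr, Y1 @ Yr)" and s1: "St G1 (z1, Y1)"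
    and sr: "St ([Br (plug c X)] @ G2) (zr, Yr)" by (rule St_appE)
  obtain zb Yb z2 Y2 where e: "(zr, Yr) = (zb + z2, Yb @ Y2)" and sb: "St [Br (plug c X)] (zb, Yb)"
    and s2: "St G2 (z2, Y2)" by (rule St_appE[OF sr])
  from St_single_Br[OF sb] obtain z' G' where b: "(zb, Yb) = ({#}, [SBr z' G'])" and sp: "St (plug c X) (z', G')" by blast
  from In.IH[OF sp] obtain c' z G where sp': "(z', G') = splug c' z G" "Sc c c'" "St X (z, G)" by blast
  from sp'(1) have "case_prod SBr (splug c' z G) = SBr z' G'" by (metis case_prod_conv)
  then show ?case using sp'  using S e b s1 s2
    by (rule_tac x="SIn (z1 + z2) Y1 c' Y2" in exI, rule_tac x=z in exI, rule_tac x=G in exI)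
       (auto intro: Sc.intros simp: ac_simps)
qed

lemma St_decompE:
  assumes "St (plug c (D1 @ M @ D2)) S"
  obtains c' z1 Y1 zm Ym z2 Y2 where "S = splug c' (z1 + zm + z2) (Y1 @ Ym @ Y2)" "St M (zm, Ym)"
    "\<And>Z zz YZ. St Z (zz, YZ) \<Longrightarrow> St (plug c (D1 @ Z @ D2)) (splug c' (z1 + zz + z2) (Y1 @ YZ @ Y2))"
proof -
  from St_plug_split[OF assms] obtain c' z G where S: "S = splug c' z G" and sc: "Sc c c'"
    and s: "St (D1 @ M @ D2) (z, G)" by blast
  obtain z1 Y1 zr Yr where e1: "(z, G) = (z1 + zr, Y1 @ Yr)" and s1: "St D1 (z1, Y1)"
    and sr: "St (M @ D2) (zr, Yr)" by (rule St_appE[OF s])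
  obtain zm Ym z2 Y2 where e2: "(zr, Yr) = (zm + z2, Ym @ Y2)" and sm: "St M (zm, Ym)"
    and s2: "St D2 (z2, Y2)" by (rule St_appE[OF sr])
  have "S = splug c' (z1 + zm + z2) (Y1 @ Ym @ Y2)" using S e1 e2 by (simp add: ac_simps)
  moreover have "\<And>Z zz YZ. St Z (zz, YZ) \<Longrightarrow> St (plug c (D1 @ Z @ D2)) (splug c' (z1 + zz + z2) (Y1 @ YZ @ Y2))"
  proof -
    fix Z zz YZ assume "St Z (zz, YZ)"
    from St_append[OF s1 St_append[OF this s2]] have "St (D1 @ Z @ D2) (z1 + zz + z2, Y1 @ YZ @ Y2)"
      by (simp add: ac_simps)
    from St_plug[OF sc this] show "St (plug c (D1 @ Z @ D2)) (splug c' (z1 + zz + z2) (Y1 @ YZ @ Y2))" .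
  qed
  ultimately show ?thesis using that sm by blast
qed

lemma St_bangs: "St (bangs As) S \<Longrightarrow> \<exists>Ms Ns. S = (mset Ms, map (\<lambda>A. SF (Bang A)) Ns) \<and> mset As = mset Ms + mset Ns"
proof (induction As arbitrary: S)
  case Nil then show ?case by (auto dest: St_nil_inv)
next
  case (Cons B As)
  from St_Cons_inv[OF Cons.prems[simplified]] show ?case
  proof (elim disjE exE conjE)
    fix A z G assume a: "F (Bang B) = F (Bang A)" "S = (z + {#A#}, G)" "St (bangs As) (z, G)"
    from Cons.IH[OF a(3)] obtain Ms Ns where "(z, G) = (mset Ms, map (\<lambda>A. SF (Bang A)) Ns)" "mset As = mset Ms + mset Ns" by blast
    then show ?thesis using a by (rule_tac x="A # Ms" in exI, rule_tac x=Ns in exI) (simp add: ac_simps)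
  next
    fix B' z G assume a: "F (Bang B) = F B'" "S = (z, SF B' # G)" "St (bangs As) (z, G)"
    from Cons.IH[OF a(3)] obtain Ms Ns where "(z, G) = (mset Ms, map (\<lambda>A. SF (Bang A)) Ns)" "mset As = mset Ms + mset Ns" by blast
    then show ?thesis using a by (rule_tac x="Ms" in exI, rule_tac x="B # Ns" in exI) (simp add: ac_simps)
  qed simp
qed

lemma St_bangs_all: "St (bangs As) (mset As, [])"
proof (induction As)
  case Nil then show ?case by (simp add: St_nil)
next
  case (Cons A As) from St_bang[OF this, of A] show ?case by (simp add: ac_simps)
qed

lemma bangL_list: "Md b (splug c (z + mset Ns) (G1 @ G2)) C \<Longrightarrow> Md b (splug c z (G1 @ map (\<lambda>A. SF (Bang A)) Ns @ G2)) C"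
proof (induction Ns arbitrary: z G2)
  case Nil then show ?case by simp
next
  case (Cons A Ns)
  from Cons.prems have "Md b (splug c ((z + {#A#}) + mset Ns) (G1 @ G2)) C" by (simp add: ac_simps)
  from Cons.IH[OF this] have "Md b (splug c (z + {#A#}) (G1 @ (map (\<lambda>A. SF (Bang A)) Ns @ G2))) C" .
  from Md.bangL[OF this] show ?case by simp
qed

lemma Md_eq: "Md b (splug c z G) C \<Longrightarrow> z = z' \<Longrightarrow> G = G' \<Longrightarrow> Md b (splug c z' G') C"
  by simp



lemma St_single_nb: "St [F B] S \<Longrightarrow> (\<And>A. B \<noteq> Bang A) \<Longrightarrow> S = ({#}, [SF B])"
  using St_single by blast

lemma Fd_to_Md: "Fd False T C \<Longrightarrow> St T S \<Longrightarrow> Md False S C"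
proof (induction arbitrary: S rule: Fd.induct)
  case (ax A)
  from St_single[OF ax.prems] show ?case
  proof (elim disjE exE conjE)
    assume "S = ({#}, [SF A])" then show ?thesis by (simp add: Md.ax)
  next
    fix A0 assume a: "A = Bang A0" "S = ({#A0#}, [])"
    have "Md False (splug SHole {#} ([] @ [SF A0] @ [])) A0" by (simp add: Md.ax)
    from Md.bangP[OF this] have "Md False ({#A0#}, []) A0" by simp
    from Md.bangR'[OF _ this] show ?thesis using a by simp
  qed
next
  case oneR then show ?case by (auto dest: St_nil_inv intro: Md.oneR)
next
  case (overL G B c D1 C D2 D)
  have pp: "St (plug c (D1 @ ([F (Over C B)] @ G) @ D2)) S" using overL.prems by simp
  obtain c' z1 Y1 zm Ym z2 Y2 where S: "S = splug c' (z1 + zm + z2) (Y1 @ Ym @ Y2)"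
    and sm: "St ([F (Over C B)] @ G) (zm, Ym)"
    and sZ: "\<And>Z zz YZ. St Z (zz, YZ) \<Longrightarrow> St (plug c (D1 @ Z @ D2)) (splug c' (z1 + zz + z2) (Y1 @ YZ @ Y2))"
    using St_decompE[OF pp] by metis
  obtain za Ya zg Yg where e: "(zm, Ym) = (za + zg, Ya @ Yg)" and sa: "St [F (Over C B)] (za, Ya)"
    and sg: "St G (zg, Yg)" using St_appE[OF sm] by metis
  have ea: "(za, Ya) = ({#}, [SF (Over C B)])" by (rule St_single_nb[OF sa]) simp
  have p1: "Md False (zg, Yg) B" by (rule overL.IH(1)[OF sg])
  have p2: "Md False (splug c' (z1 + {#} + z2) (Y1 @ [SF C] @ Y2)) D" by (rule overL.IH(2)[OF sZ[OF St_one]])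
  from Md.overL[OF p1 p2] show ?case using S e ea by (simp add: ac_simps)
next
  case (overR G B C)
  obtain z Y where S: "S = (z, Y)" by (cases S)
  have "St (G @ [F B]) (z + {#}, Y @ [SF B])" using St_append[OF overR.prems[unfolded S] St_one] .
  from Md.overR[OF overR.IH[OF this[simplified]]] show ?case using S by simp
next
  case (underL G A c D1 C D2 D)
  have pp: "St (plug c (D1 @ (G @ [F (Under A C)]) @ D2)) S" using underL.prems by simp
  obtain c' z1 Y1 zm Ym z2 Y2 where S: "S = splug c' (z1 + zm + z2) (Y1 @ Ym @ Y2)"
    and sm: "St (G @ [F (Under A C)]) (zm, Ym)"
    and sZ: "\<And>Z zz YZ. St Z (zz, YZ) \<Longrightarrow> St (plug c (D1 @ Z @ D2)) (splug c' (z1 + zz + z2) (Y1 @ YZ @ Y2))"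
    using St_decompE[OF pp] by metis
  obtain zg Yg za Ya where e: "(zm, Ym) = (zg + za, Yg @ Ya)" and sg: "St G (zg, Yg)"
    and sa: "St [F (Under A C)] (za, Ya)" using St_appE[OF sm] by metis
  have ea: "(za, Ya) = ({#}, [SF (Under A C)])" by (rule St_single_nb[OF sa]) simp
  have p1: "Md False (zg, Yg) A" by (rule underL.IH(1)[OF sg])
  have p2: "Md False (splug c' (z1 + {#} + z2) (Y1 @ [SF C] @ Y2)) D" by (rule underL.IH(2)[OF sZ[OF St_one]])
  from Md.underL[OF p1 p2] show ?case using S e ea by (simp add: ac_simps)
next
  case (underR A G C)
  obtain z Y where S: "S = (z, Y)" by (cases S)
  have "St (F A # G) (z, SF A # Y)" using St_F[OF underR.prems[unfolded S]] .
  from Md.underR[OF underR.IH[OF this]] show ?case using S by simp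
next
  case (prodL c D1 A B D2 D)
  obtain c' z1 Y1 zm Ym z2 Y2 where S: "S = splug c' (z1 + zm + z2) (Y1 @ Ym @ Y2)"
    and sm: "St [F (Prod A B)] (zm, Ym)"
    and sZ: "\<And>Z zz YZ. St Z (zz, YZ) \<Longrightarrow> St (plug c (D1 @ Z @ D2)) (splug c' (z1 + zz + z2) (Y1 @ YZ @ Y2))"
    using St_decompE[OF prodL.prems] by metis
  have ea: "(zm, Ym) = ({#}, [SF (Prod A B)])" by (rule St_single_nb[OF sm]) simp
  have "St [F A, F B] ({#} + {#}, [SF A] @ [SF B])" using St_append[OF St_one St_one] by simp
  from prodL.IH[OF sZ[OF this]] have "Md False (splug c' (z1 + z2) (Y1 @ [SF A, SF B] @ Y2)) D" by simp
  from Md.prodL[OF this] show ?case using S ea by simp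
next
  case (prodR D A G B)
  obtain z1 Y1 z2 Y2 where S: "S = (z1 + z2, Y1 @ Y2)" and s1: "St D (z1, Y1)" and s2: "St G (z2, Y2)"
    using St_appE[OF prodR.prems] by metis
  from Md.prodR[OF prodR.IH(1)[OF s1] prodR.IH(2)[OF s2]] show ?case using S by simp
next
  case (oneL c D1 D2 A)
  obtain c' z1 Y1 zm Ym z2 Y2 where S: "S = splug c' (z1 + zm + z2) (Y1 @ Ym @ Y2)"
    and sm: "St [F One] (zm, Ym)"
    and sZ: "\<And>Z zz YZ. St Z (zz, YZ) \<Longrightarrow> St (plug c (D1 @ Z @ D2)) (splug c' (z1 + zz + z2) (Y1 @ YZ @ Y2))"
    using St_decompE[OF oneL.prems] by metis
  have ea: "(zm, Ym) = ({#}, [SF One])" by (rule St_single_nb[OF sm]) simp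
  from sZ[OF St_nil] have "St (plug c (D1 @ D2)) (splug c' (z1 + z2) (Y1 @ Y2))" by simp
  from oneL.IH[OF this] have "Md False (splug c' (z1 + z2) (Y1 @ Y2)) A" .
  from Md.oneL[OF this] show ?case using S ea by simp
next
  case (joinL c D1 A1 D2 C A2)
  obtain c' z1 Y1 zm Ym z2 Y2 where S: "S = splug c' (z1 + zm + z2) (Y1 @ Ym @ Y2)"
    and sm: "St [F (Join A1 A2)] (zm, Ym)"
    and sZ: "\<And>Z zz YZ. St Z (zz, YZ) \<Longrightarrow> St (plug c (D1 @ Z @ D2)) (splug c' (z1 + zz + z2) (Y1 @ YZ @ Y2))"
    using St_decompE[OF joinL.prems] by metis
  have ea: "(zm, Ym) = ({#}, [SF (Join A1 A2)])" by (rule St_single_nb[OF sm]) simp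
  from joinL.IH(1)[OF sZ[OF St_one]] have h1: "Md False (splug c' (z1 + z2) (Y1 @ [SF A1] @ Y2)) C" by simp
  from joinL.IH(2)[OF sZ[OF St_one]] have h2: "Md False (splug c' (z1 + z2) (Y1 @ [SF A2] @ Y2)) C" by simp
  from Md.joinL[OF h1 h2] show ?case using S ea by simp
next
  case (joinR1 X A1 A2)
  then show ?case by (simp add: Md.joinR1)
next
  case (joinR2 X A2 A1)
  then show ?case by (simp add: Md.joinR2)
next
  case (meetL1 c D1 A1 D2 C A2)
  obtain c' z1 Y1 zm Ym z2 Y2 where S: "S = splug c' (z1 + zm + z2) (Y1 @ Ym @ Y2)"
    and sm: "St [F (Meet A1 A2)] (zm, Ym)"
    and sZ: "\<And>Z zz YZ. St Z (zz, YZ) \<Longrightarrow> St (plug c (D1 @ Z @ D2)) (splug c' (z1 + zz + z2) (Y1 @ YZ @ Y2))"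
    using St_decompE[OF meetL1.prems] by metis
  have ea: "(zm, Ym) = ({#}, [SF (Meet A1 A2)])" by (rule St_single_nb[OF sm]) simp
  from meetL1.IH(1)[OF sZ[OF St_one]] have h1: "Md False (splug c' (z1 + z2) (Y1 @ [SF A1] @ Y2)) C" by simp
  from Md.meetL1[OF h1] show ?case using S ea by simp
next
  case (meetL2 c D1 A2 D2 C A1)
  obtain c' z1 Y1 zm Ym z2 Y2 where S: "S = splug c' (z1 + zm + z2) (Y1 @ Ym @ Y2)"
    and sm: "St [F (Meet A1 A2)] (zm, Ym)"
    and sZ: "\<And>Z zz YZ. St Z (zz, YZ) \<Longrightarrow> St (plug c (D1 @ Z @ D2)) (splug c' (z1 + zz + z2) (Y1 @ YZ @ Y2))"
    using St_decompE[OF meetL2.prems] by metis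
  have ea: "(zm, Ym) = ({#}, [SF (Meet A1 A2)])" by (rule St_single_nb[OF sm]) simp
  from meetL2.IH(1)[OF sZ[OF St_one]] have h1: "Md False (splug c' (z1 + z2) (Y1 @ [SF A2] @ Y2)) C" by simp
  from Md.meetL2[OF h1] show ?case using S ea by simp
next
  case (meetR X A1 A2)
  then show ?case by (simp add: Md.meetR)
next
  case (boxL c D1 A D2 B)
  obtain c' z1 Y1 zm Ym z2 Y2 where S: "S = splug c' (z1 + zm + z2) (Y1 @ Ym @ Y2)"
    and sm: "St [Br [F (Box A)]] (zm, Ym)"
    and sZ: "\<And>Z zz YZ. St Z (zz, YZ) \<Longrightarrow> St (plug c (D1 @ Z @ D2)) (splug c' (z1 + zz + z2) (Y1 @ YZ @ Y2))"
    using St_decompE[OF boxL.prems] by metis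
  from St_single_Br[OF sm] obtain z' G' where e: "(zm, Ym) = ({#}, [SBr z' G'])" and s': "St [F (Box A)] (z', G')"
    by blast
  have ea: "(z', G') = ({#}, [SF (Box A)])" by (rule St_single_nb[OF s']) simp
  from boxL.IH(1)[OF sZ[OF St_one]] have h1: "Md False (splug c' (z1 + z2) (Y1 @ [SF A] @ Y2)) B" by simp
  from Md.boxL[OF h1] show ?case using S e ea by simp
next
  case (boxR X A)
  have "St [Br X] ({#}, [case_prod SBr S])" using St_oneBr[of X "fst S" "snd S"] boxR.prems
    by (cases S) simp
  from Md.boxR[OF boxR.IH[OF this]] show ?case .
next
  case (diamL c D1 A D2 B)
  obtain c' z1 Y1 zm Ym z2 Y2 where S: "S = splug c' (z1 + zm + z2) (Y1 @ Ym @ Y2)"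
    and sm: "St [F (Diam A)] (zm, Ym)"
    and sZ: "\<And>Z zz YZ. St Z (zz, YZ) \<Longrightarrow> St (plug c (D1 @ Z @ D2)) (splug c' (z1 + zz + z2) (Y1 @ YZ @ Y2))"
    using St_decompE[OF diamL.prems] by metis
  have ea: "(zm, Ym) = ({#}, [SF (Diam A)])" by (rule St_single_nb[OF sm]) simp
  from diamL.IH(1)[OF sZ[OF St_oneBr[OF St_one]]]
  have h1: "Md False (splug c' (z1 + z2) (Y1 @ [SBr {#} [SF A]] @ Y2)) B" by simp
  from Md.diamL[OF h1] show ?case using S ea by simp
next
  case (diamR X A)
  from St_single_Br[OF diamR.prems] obtain z' G' where S: "S = ({#}, [SBr z' G'])" and s: "St X (z', G')"
    by blast
  from Md.diamR[OF diamR.IH[OF s]] show ?case using S by simp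
next
  case (bangL c D1 A D2 C)
  obtain c' z1 Y1 zm Ym z2 Y2 where S: "S = splug c' (z1 + zm + z2) (Y1 @ Ym @ Y2)"
    and sm: "St [F (Bang A)] (zm, Ym)"
    and sZ: "\<And>Z zz YZ. St Z (zz, YZ) \<Longrightarrow> St (plug c (D1 @ Z @ D2)) (splug c' (z1 + zz + z2) (Y1 @ YZ @ Y2))"
    using St_decompE[OF bangL.prems] by metis
  from bangL.IH(1)[OF sZ[OF St_one]] have h1: "Md False (splug c' (z1 + z2) (Y1 @ [SF A] @ Y2)) C" by simp
  from Md.bangP[OF h1] have h2: "Md False (splug c' (z1 + z2 + {#A#}) (Y1 @ Y2)) C" .
  from St_single[OF sm] show ?case
  proof (elim disjE exE conjE)
    assume "(zm, Ym) = ({#}, [SF (Bang A)])"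
    with Md.bangL[OF h2] show ?thesis using S by simp
  next
    fix A0 assume "Bang A = Bang A0" "(zm, Ym) = ({#A0#}, [])"
    with h2 show ?thesis using S by (simp add: ac_simps)
  qed
next
  case (bangP1 c D1 A P D2 C)
  have pp: "St (plug c (D1 @ (P @ [F (Bang A)]) @ D2)) S" using bangP1.prems by simp
  obtain c' z1 Y1 zm Ym z2 Y2 where S: "S = splug c' (z1 + zm + z2) (Y1 @ Ym @ Y2)"
    and sm: "St (P @ [F (Bang A)]) (zm, Ym)"
    and sZ: "\<And>Z zz YZ. St Z (zz, YZ) \<Longrightarrow> St (plug c (D1 @ Z @ D2)) (splug c' (z1 + zz + z2) (Y1 @ YZ @ Y2))"
    using St_decompE[OF pp] by metis
  obtain zp Yp za Ya where e: "(zm, Ym) = (zp + za, Yp @ Ya)" and sp: "St P (zp, Yp)"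
    and sa: "St [F (Bang A)] (za, Ya)" using St_appE[OF sm] by metis
  have "St ([F (Bang A)] @ P) ({#A#} + zp, [] @ Yp)" by (rule St_append[OF St_oneB sp])
  from sZ[OF this] have "St (plug c (D1 @ [F (Bang A)] @ P @ D2)) (splug c' (z1 + ({#A#} + zp) + z2) (Y1 @ Yp @ Y2))" by simp
  from bangP1.IH[OF this] have h2: "Md False (splug c' (z1 + z2 + zp + {#A#}) ((Y1 @ Yp) @ Y2)) C"
    by (simp add: ac_simps)
  from St_single[OF sa] show ?case
  proof (elim disjE exE conjE)
    assume "(za, Ya) = ({#}, [SF (Bang A)])"
    with Md.bangL[OF h2] show ?thesis using S e by (simp add: ac_simps)
  next
    fix A0 assume "Bang A = Bang A0" "(za, Ya) = ({#A0#}, [])"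
    with h2 show ?thesis using S e by (simp add: ac_simps)
  qed
next
  case (bangP2 c D1 P A D2 C)
  have pp: "St (plug c (D1 @ ([F (Bang A)] @ P) @ D2)) S" using bangP2.prems by simp
  obtain c' z1 Y1 zm Ym z2 Y2 where S: "S = splug c' (z1 + zm + z2) (Y1 @ Ym @ Y2)"
    and sm: "St ([F (Bang A)] @ P) (zm, Ym)"
    and sZ: "\<And>Z zz YZ. St Z (zz, YZ) \<Longrightarrow> St (plug c (D1 @ Z @ D2)) (splug c' (z1 + zz + z2) (Y1 @ YZ @ Y2))"
    using St_decompE[OF pp] by metis
  obtain za Ya zp Yp where e: "(zm, Ym) = (za + zp, Ya @ Yp)" and sa: "St [F (Bang A)] (za, Ya)"
    and sp: "St P (zp, Yp)" using St_appE[OF sm] by metis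
  have "St (P @ [F (Bang A)]) (zp + {#A#}, Yp @ [])" by (rule St_append[OF sp St_oneB])
  from sZ[OF this] have "St (plug c (D1 @ P @ [F (Bang A)] @ D2)) (splug c' (z1 + (zp + {#A#}) + z2) (Y1 @ Yp @ Y2))" by simp
  from bangP2.IH[OF this] have h2: "Md False (splug c' (z1 + z2 + zp + {#A#}) (Y1 @ Yp @ Y2)) C"
    by (simp add: ac_simps)
  from St_single[OF sa] show ?case
  proof (elim disjE exE conjE)
    assume "(za, Ya) = ({#}, [SF (Bang A)])"
    with Md.bangL[OF h2] show ?thesis using S e by (simp add: ac_simps)
  next
    fix A0 assume "Bang A = Bang A0" "(za, Ya) = ({#A0#}, [])"
    with h2 show ?thesis using S e by (simp add: ac_simps)
  qed
next
  case (bangR As B)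
  from St_bangs[OF bangR.prems] obtain Ms Ns where S: "S = (mset Ms, map (\<lambda>A. SF (Bang A)) Ns)"
    and m: "mset As = mset Ms + mset Ns" by blast
  from bangR.IH[OF St_bangs_all] have hB: "Md False (mset As, []) B" .
  have ne: "mset As \<noteq> {#}" using bangR.hyps(1) by simp
  from Md.bangR'[OF ne hB] have "Md False (splug SHole (mset Ms + mset Ns) ([] @ [])) (Bang B)"
    using m by simp
  from bangL_list[OF this] show ?case using S by simp
next
  case (bangC As c G1 G2 G3 C)
  from St_plug_split[OF bangC.prems] obtain c' z Y where S: "S = splug c' z Y" and sc: "Sc c c'"
    and s: "St (bangs As @ G1 @ G2 @ G3) (z, Y)" by blast
  obtain za Ya zr Yr where e1: "(z, Y) = (za + zr, Ya @ Yr)" and sa: "St (bangs As) (za, Ya)"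
    and sr: "St (G1 @ G2 @ G3) (zr, Yr)" using St_appE[OF s] by metis
  obtain z1 Y1 zr2 Yr2 where e2: "(zr, Yr) = (z1 + zr2, Y1 @ Yr2)" and s1: "St G1 (z1, Y1)"
    and sr2: "St (G2 @ G3) (zr2, Yr2)" using St_appE[OF sr] by metis
  obtain z2 Y2 z3 Y3 where e3: "(zr2, Yr2) = (z2 + z3, Y2 @ Y3)" and s2: "St G2 (z2, Y2)"
    and s3: "St G3 (z3, Y3)" using St_appE[OF sr2] by metis
  from St_bangs[OF sa] obtain Ms Ns where ea: "(za, Ya) = (mset Ms, map (\<lambda>A. SF (Bang A)) Ns)"
    and m: "mset As = mset Ms + mset Ns" by blast
  have "St (bangs As @ G2) (mset As + z2, [] @ Y2)" by (rule St_append[OF St_bangs_all s2])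
  from St_oneBr[OF this] have sb: "St [Br (bangs As @ G2)] ({#}, [SBr (mset As + z2) Y2])" by simp
  have "St (bangs As @ G1 @ [Br (bangs As @ G2)] @ G3) (mset As + (z1 + ({#} + z3)), [] @ Y1 @ [SBr (mset As + z2) Y2] @ Y3)"
    by (rule St_append[OF St_bangs_all St_append[OF s1 St_append[OF sb s3]]])
  from bangC.IH[OF St_plug[OF sc this]]
  have "Md False (splug c' ((z1 + z3) + mset As) (Y1 @ [SBr (z2 + mset As) Y2] @ Y3)) C"
    by (simp add: ac_simps)
  from Md.bangC'[OF _ this] bangC.hyps(1)
  have "Md False (splug c' (z1 + z3 + mset As + z2) (Y1 @ Y2 @ Y3)) C" by simp
  then have "Md False (splug c' ((mset Ms + z1 + z2 + z3) + mset Ns) ([] @ (Y1 @ Y2 @ Y3))) C"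
    using m by (simp add: ac_simps)
  from bangL_list[OF this] show ?case using S e1 e2 e3 ea by (simp add: ac_simps)
next
  case (cutR P A c G1 G2 C)
  then show ?case by simp
qed


theorem proposition2:
  fixes X :: "tt list" and C :: fm
  shows "(Fd False X C \<longleftrightarrow> Fd True X C)
       \<and> (Fd True X C \<longleftrightarrow> Md True ({#}, map emb X) C)
       \<and> (Md True ({#}, map emb X) C \<longleftrightarrow> Md False ({#}, map emb X) C)"
proof -
  have a: "Fd False X C \<Longrightarrow> Fd True X C" by (rule Fd_mono)
  have b: "Fd True X C \<Longrightarrow> Fd False X C" by (rule cut_elim)
  have c: "Fd False X C \<Longrightarrow> Md False ({#}, map emb X) C" using Fd_to_Md St_emb by blast
  have d: "Md True ({#}, map emb X) C \<Longrightarrow> Fd True X C" using Md_to_Fd[of True "({#}, map emb X)" C] trm_emb by simp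
  have e: "Md False ({#}, map emb X) C \<Longrightarrow> Md True ({#}, map emb X) C" by (rule Md_mono)
  show ?thesis using a b c d e by blast
qed

end
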